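(* Let $\Omega\subset\mathbb{R}^3$ be a bounded domain with $C^2$ boundary and outward unit normal $\nu$. Suppose that $v\in C^1(\Omega)\cap L^2(\Omega)$ is a solution to the stationary Euler equation $v\cdot\nabla v+\nabla\widetilde p=0$, $\mathrm{div}\, v=0$ in $\Omega$, with pressure $\widetilde p\in C^1(\Omega)\cap L^1(\Omega)$. Assume that $\nu\cdot v|_{\partial\Omega}=0$ and $\widetilde p|_{\partial\Omega}=c$, where $c$ is a constant. Then \[ u(x):=\begin{cases} v(x) & x\in\Omega,\\ 0 & x\notin\Omega,\end{cases} \qquad p(x):=\begin{cases} \widetilde p(x) & x\in\Omega,\\ c & x\notin\Omega,\end{cases} \] define a weak solution $(u,p)$ of the stationary Euler equation on $\mathbb{R}^3$.
   Context: A pair $(u,p)\in L^2_{\mathrm{loc}}(\mathbb{R}^3)$ is a weak solution of the stationary Euler equation if $\int_{\mathbb{R}^3}[(u\otimes u)\cdot\nabla w+p\,\mathrm{div}\, w]\,dx=0$ and $\int_{\mathbb{R}^3}u\cdot\nabla\phi\,dx=0$ for all vector fields $w\in C^\infty_c(\mathbb{R}^3;\mathbb{R}^3)$ and all $\phi\in C^\infty_c(\mathbb{R}^3)$. *)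

theory Defs
  imports "HOL-Analysis.Analysis"
begin

definition pd :: "3 \<Rightarrow> (real^3 \<Rightarrow> real) \<Rightarrow> real^3 \<Rightarrow> real" where
  "pd i f x = frechet_derivative f (at x) (axis i 1)"

definition grad :: "(real^3 \<Rightarrow> real) \<Rightarrow> real^3 \<Rightarrow> real^3" where
  "grad f x = (\<chi> i. pd i f x)"

fun Ck_on :: "nat \<Rightarrow> (real^3) set \<Rightarrow> (real^3 \<Rightarrow> real) \<Rightarrow> bool" where
  "Ck_on 0 S f = continuous_on S f"
| "Ck_on (Suc k) S f = (f differentiable_on S \<and> (\<forall>i. Ck_on k S (pd i f)))"

definition smooth :: "(real^3 \<Rightarrow> real) \<Rightarrow> bool" where
  "smooth f \<longleftrightarrow> (\<forall>k. Ck_on k UNIV f)"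

definition test_fun :: "(real^3 \<Rightarrow> real) \<Rightarrow> bool" where
  "test_fun f \<longleftrightarrow> smooth f \<and> compact (closure {x. f x \<noteq> 0})"

definition test_field :: "(real^3 \<Rightarrow> real^3) \<Rightarrow> bool" where
  "test_field w \<longleftrightarrow> (\<forall>i. smooth (\<lambda>x. w x $ i)) \<and> compact (closure {x. w x \<noteq> 0})"

definition div3 :: "(real^3 \<Rightarrow> real^3) \<Rightarrow> real^3 \<Rightarrow> real" where
  "div3 w x = (\<Sum>i\<in>UNIV. pd i (\<lambda>y. w y $ i) x)"

text \<open>(u \<otimes> u) : \<nabla> w = sum over i,j of u_i u_j d_j w_i\<close>
definition tensor_grad :: "real^3 \<Rightarrow> (real^3 \<Rightarrow> real^3) \<Rightarrow> real^3 \<Rightarrow> real" where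
  "tensor_grad a w x = (\<Sum>i\<in>UNIV. \<Sum>j\<in>UNIV. a $ i * a $ j * pd j (\<lambda>y. w y $ i) x)"

definition L2_loc :: "(real^3 \<Rightarrow> 'b::euclidean_space) \<Rightarrow> bool" where
  "L2_loc f \<longleftrightarrow> f \<in> borel_measurable lborel \<and>
     (\<forall>K. compact K \<longrightarrow> set_integrable lborel K (\<lambda>x. (norm (f x))\<^sup>2))"

definition weak_euler :: "(real^3 \<Rightarrow> real^3) \<Rightarrow> (real^3 \<Rightarrow> real) \<Rightarrow> bool" where
  "weak_euler u p \<longleftrightarrow> L2_loc u \<and> L2_loc p \<and>
     (\<forall>w. test_field w \<longrightarrow>
        (\<integral>x. tensor_grad (u x) w x + p x * div3 w x \<partial>lborel) = 0) \<and>
     (\<forall>\<phi>. test_fun \<phi> \<longrightarrow> (\<integral>x. u x \<bullet> grad \<phi> x \<partial>lborel) = 0)"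

definition C2_boundary_normal :: "(real^3) set \<Rightarrow> (real^3 \<Rightarrow> real^3) \<Rightarrow> bool" where
  "C2_boundary_normal \<Omega> \<nu> \<longleftrightarrow>
     (\<forall>x0 \<in> frontier \<Omega>. \<exists>r>0. \<exists>\<phi>. Ck_on 2 (ball x0 r) \<phi> \<and>
        (\<forall>x\<in>ball x0 r. grad \<phi> x \<noteq> 0) \<and>
        \<Omega> \<inter> ball x0 r = {x \<in> ball x0 r. \<phi> x < 0} \<and>
        (\<forall>x \<in> frontier \<Omega> \<inter> ball x0 r. \<nu> x = grad \<phi> x /\<^sub>R norm (grad \<phi> x)))"

end

theory Submission
  imports Defs
begin


definition C1at :: "(real^3 \<Rightarrow> real) \<Rightarrow> real^3 \<Rightarrow> bool" where
  "C1at f x \<longleftrightarrow> (\<exists>T. open T \<and> x \<in> T \<and> (\<forall>y\<in>T. f differentiable at y)) \<and> (\<forall>i. isCont (pd i f) x)"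

lemma pd_has: "(f has_derivative D) (at x) \<Longrightarrow> pd i f x = D (axis i 1)"
  unfolding pd_def using frechet_derivative_at by metis

lemma pd_local:
  assumes "open T" "x \<in> T" "\<And>y. y \<in> T \<Longrightarrow> f y = g y"
  shows "pd i f x = pd i g x"
proof -
  have "(f has_derivative D) (at x) \<longleftrightarrow> (g has_derivative D) (at x)" for D
  proof
    assume "(f has_derivative D) (at x)"
    then show "(g has_derivative D) (at x)"
      by (rule has_derivative_transform_within_open[OF _ assms(1,2)]) (rule assms(3))
  next
    assume "(g has_derivative D) (at x)"
    then show "(f has_derivative D) (at x)"
      by (rule has_derivative_transform_within_open[OF _ assms(1,2)]) (rule assms(3)[symmetric])
  qed
  then have e: "(\<lambda>D. (f has_derivative D) (at x)) = (\<lambda>D. (g has_derivative D) (at x))" by (rule ext)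
  show ?thesis unfolding pd_def frechet_derivative_def by (simp only: e)
qed

lemma diff_local:
  assumes "open T" "x \<in> T" "\<And>y. y \<in> T \<Longrightarrow> f y = g y" "g differentiable at x"
  shows "f differentiable at x"
proof -
  obtain D where "(g has_derivative D) (at x)" using assms(4) unfolding differentiable_def by blast
  then have "(f has_derivative D) (at x)"
    by (rule has_derivative_transform_within_open[OF _ assms(1,2)]) (rule assms(3)[symmetric])
  then show ?thesis unfolding differentiable_def by blast
qed

lemma ev_nhds_obtain:
  assumes "eventually P (nhds x)"
  obtains T where "open T" "x \<in> T" "\<forall>y\<in>T. P y"
  using assms unfolding eventually_nhds by auto

lemma pd_eventually:
  assumes "eventually (\<lambda>y. f y = g y) (nhds x)"
  shows "eventually (\<lambda>y. pd i f y = pd i g y) (nhds x)"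
proof -
  obtain T where T: "open T" "x \<in> T" "\<forall>y\<in>T. f y = g y"
    using assms by (rule ev_nhds_obtain)
  have "\<forall>y\<in>T. pd i f y = pd i g y"
  proof
    fix y assume "y \<in> T" then show "pd i f y = pd i g y" using pd_local[of T y f g i] T by blast
  qed
  then show ?thesis unfolding eventually_nhds using T by blast
qed

lemma C1at_cong:
  assumes "eventually (\<lambda>y. f y = g y) (nhds x)" "C1at g x"
  shows "C1at f x"
proof -
  obtain T where T: "open T" "x \<in> T" "\<forall>y\<in>T. f y = g y"
    using assms(1) by (rule ev_nhds_obtain)
  obtain T2 where T2: "open T2" "x \<in> T2" "\<forall>y\<in>T2. g differentiable at y"
    using assms(2) unfolding C1at_def by blast
  have "\<forall>y\<in>T \<inter> T2. f differentiable at y"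
  proof
    fix y assume y: "y \<in> T \<inter> T2"
    show "f differentiable at y" using diff_local[of T y f g] T T2 y by blast
  qed
  moreover have "isCont (pd i f) x" for i
  proof -
    have "isCont (pd i g) x" using assms(2) unfolding C1at_def by blast
    then show ?thesis using isCont_cong[OF pd_eventually[OF assms(1), of i]] by blast
  qed
  ultimately show ?thesis unfolding C1at_def using T T2 by (metis IntI open_Int)
qed

lemma C1at_deriv:
  assumes "open T" "x \<in> T" "\<And>y. y\<in>T \<Longrightarrow> (f has_derivative D y) (at y)"
    "\<And>i. isCont (\<lambda>y. D y (axis i 1)) x"
  shows "C1at f x"
proof -
  have "eventually (\<lambda>y. pd i f y = D y (axis i 1)) (nhds x)" for i
    unfolding eventually_nhds using assms(1,2,3) pd_has by metis
  then have "isCont (pd i f) x" for i using isCont_cong[of "pd i f" "\<lambda>y. D y (axis i 1)" x] assms(4) by blast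
  moreover have "\<forall>y\<in>T. f differentiable at y" using assms(3) differentiable_def by blast
  ultimately show ?thesis unfolding C1at_def using assms(1,2) by blast
qed

lemma C1at_differentiable: "C1at f x \<Longrightarrow> f differentiable at x"
  unfolding C1at_def by blast

lemma C1at_isCont: "C1at f x \<Longrightarrow> isCont f x"
  using C1at_differentiable differentiable_imp_continuous_within by blast

lemma C1at_pd_isCont: "C1at f x \<Longrightarrow> isCont (pd i f) x"
  unfolding C1at_def by blast

lemma C1at_nbhd:
  assumes "C1at f x"
  obtains T where "open T" "x \<in> T" "\<And>y. y\<in>T \<Longrightarrow> (f has_derivative frechet_derivative f (at y)) (at y)"
  using assms unfolding C1at_def using frechet_derivative_works by blast

lemma C1at_const: "C1at (\<lambda>y. c) x"
  by (rule C1at_deriv[of UNIV _ _ "\<lambda>y v. 0"]) (auto intro: derivative_eq_intros)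

lemma C1at_mult:
  assumes "C1at f x" "C1at g x"
  shows "C1at (\<lambda>y. f y * g y) x"
proof -
  obtain T1 where T1: "open T1" "x \<in> T1" "\<And>y. y\<in>T1 \<Longrightarrow> (f has_derivative frechet_derivative f (at y)) (at y)"
    using C1at_nbhd[OF assms(1)] by blast
  obtain T2 where T2: "open T2" "x \<in> T2" "\<And>y. y\<in>T2 \<Longrightarrow> (g has_derivative frechet_derivative g (at y)) (at y)"
    using C1at_nbhd[OF assms(2)] by blast
  show ?thesis
  proof (rule C1at_deriv[of "T1 \<inter> T2" _ _ "\<lambda>y v. f y * frechet_derivative g (at y) v + frechet_derivative f (at y) v * g y"])
    show "open (T1 \<inter> T2)" "x \<in> T1 \<inter> T2" using T1 T2 by auto
    show "((\<lambda>y. f y * g y) has_derivative (\<lambda>v. f y * frechet_derivative g (at y) v + frechet_derivative f (at y) v * g y)) (at y)"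
      if "y \<in> T1 \<inter> T2" for y using has_derivative_mult[OF T1(3) T2(3)] that by auto
    show "isCont (\<lambda>y. f y * frechet_derivative g (at y) (axis i 1) + frechet_derivative f (at y) (axis i 1) * g y) x" for i
      using assms C1at_isCont C1at_pd_isCont unfolding pd_def[symmetric]
      by (intro continuous_intros) auto
  qed
qed

lemma C1at_add:
  assumes "C1at f x" "C1at g x"
  shows "C1at (\<lambda>y. f y + g y) x"
proof -
  obtain T1 where T1: "open T1" "x \<in> T1" "\<And>y. y\<in>T1 \<Longrightarrow> (f has_derivative frechet_derivative f (at y)) (at y)"
    using C1at_nbhd[OF assms(1)] by blast
  obtain T2 where T2: "open T2" "x \<in> T2" "\<And>y. y\<in>T2 \<Longrightarrow> (g has_derivative frechet_derivative g (at y)) (at y)"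
    using C1at_nbhd[OF assms(2)] by blast
  show ?thesis
  proof (rule C1at_deriv[of "T1 \<inter> T2" _ _ "\<lambda>y v. frechet_derivative f (at y) v + frechet_derivative g (at y) v"])
    show "open (T1 \<inter> T2)" "x \<in> T1 \<inter> T2" using T1 T2 by auto
    show "((\<lambda>y. f y + g y) has_derivative (\<lambda>v. frechet_derivative f (at y) v + frechet_derivative g (at y) v)) (at y)"
      if "y \<in> T1 \<inter> T2" for y using has_derivative_add[OF T1(3) T2(3)] that by auto
    show "isCont (\<lambda>y. frechet_derivative f (at y) (axis i 1) + frechet_derivative g (at y) (axis i 1)) x" for i
      using assms C1at_isCont C1at_pd_isCont unfolding pd_def[symmetric]
      by (intro continuous_intros) auto
  qed
qed

lemma C1at_comp:
  fixes h h' :: "real \<Rightarrow> real"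
  assumes "C1at f x" "\<And>s. (h has_real_derivative h' s) (at s)" "continuous_on UNIV h'"
  shows "C1at (\<lambda>y. h (f y)) x"
proof -
  obtain T1 where T1: "open T1" "x \<in> T1" "\<And>y. y\<in>T1 \<Longrightarrow> (f has_derivative frechet_derivative f (at y)) (at y)"
    using C1at_nbhd[OF assms(1)] by blast
  show ?thesis
  proof (rule C1at_deriv[of "T1" _ _ "\<lambda>y v. h' (f y) * frechet_derivative f (at y) v"])
    show "open T1" "x \<in> T1" using T1 by auto
    show "((\<lambda>y. h (f y)) has_derivative (\<lambda>v. h' (f y) * frechet_derivative f (at y) v)) (at y)"
      if "y \<in> T1" for y
      using has_derivative_compose[OF T1(3)[OF that] assms(2)[unfolded has_field_derivative_def, of "f y"]] that
      by (simp add: mult.commute)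
    have "isCont h' (f x)" using assms(3) by (simp add: continuous_on_eq_continuous_at)
    then have "isCont (\<lambda>y. h' (f y)) x" using C1at_isCont[OF assms(1)] continuous_at_compose[of x f h'] by (simp add: o_def)
    then show "isCont (\<lambda>y. h' (f y) * frechet_derivative f (at y) (axis i 1)) x" for i
      using assms C1at_pd_isCont unfolding pd_def[symmetric]
      by (intro continuous_intros) auto
  qed
qed

lemma C1at_scale: "C1at f x \<Longrightarrow> C1at (\<lambda>y. c * f y) x"
  using C1at_mult[OF C1at_const] by blast

lemma C1at_minus: "C1at f x \<Longrightarrow> C1at (\<lambda>y. - f y) x"
  using C1at_scale[of f x "-1"] by simp

lemma C1at_diff: "C1at f x \<Longrightarrow> C1at g x \<Longrightarrow> C1at (\<lambda>y. f y - g y) x"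
  using C1at_add[OF _ C1at_minus, of f x g] by simp

lemma C1at_sum: "finite A \<Longrightarrow> (\<And>k. k \<in> A \<Longrightarrow> C1at (f k) x) \<Longrightarrow> C1at (\<lambda>y. \<Sum>k\<in>A. f k y) x"
  by (induction A rule: finite_induct) (auto intro: C1at_const C1at_add)

lemma pd_mult: "f differentiable at x \<Longrightarrow> g differentiable at x \<Longrightarrow>
   pd i (\<lambda>y. f y * g y) x = f x * pd i g x + pd i f x * g x"
proof -
  assume a: "f differentiable at x" "g differentiable at x"
  have "((\<lambda>y. f y * g y) has_derivative (\<lambda>v. f x * frechet_derivative g (at x) v + frechet_derivative f (at x) v * g x)) (at x)"
    by (rule has_derivative_mult) (use a frechet_derivative_works in auto)
  from pd_has[OF this, of i] show ?thesis unfolding pd_def by simp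
qed

lemma pd_add: "f differentiable at x \<Longrightarrow> g differentiable at x \<Longrightarrow>
   pd i (\<lambda>y. f y + g y) x = pd i f x + pd i g x"
proof -
  assume a: "f differentiable at x" "g differentiable at x"
  have "((\<lambda>y. f y + g y) has_derivative (\<lambda>v. frechet_derivative f (at x) v + frechet_derivative g (at x) v)) (at x)"
    by (rule has_derivative_add) (use a frechet_derivative_works in auto)
  from pd_has[OF this, of i] show ?thesis unfolding pd_def by simp
qed

lemma pd_const: "pd i (\<lambda>y. c) x = 0"
proof -
  have "pd i (\<lambda>y. c) x = (\<lambda>v. 0) (axis i 1)" by (rule pd_has) (rule has_derivative_const)
  then show ?thesis by simp
qed

lemma pd_comp:
  fixes h :: "real \<Rightarrow> real"
  assumes "f differentiable at x" "(h has_real_derivative d) (at (f x))"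
  shows "pd i (\<lambda>y. h (f y)) x = d * pd i f x"
proof -
  have "((\<lambda>y. h (f y)) has_derivative (\<lambda>v. (*) d (frechet_derivative f (at x) v))) (at x)"
    using has_derivative_compose[OF frechet_derivative_works[THEN iffD1, OF assms(1)] assms(2)[unfolded has_field_derivative_def]]
    by (simp add: o_def)
  from pd_has[OF this, of i] show ?thesis unfolding pd_def by simp
qed

lemma pd_scale: "f differentiable at x \<Longrightarrow> pd i (\<lambda>y. c * f y) x = c * pd i f x"
  using pd_mult[of "\<lambda>y. c" x f i] by (simp add: pd_const)

lemma pd_diff: "f differentiable at x \<Longrightarrow> g differentiable at x \<Longrightarrow>
   pd i (\<lambda>y. f y - g y) x = pd i f x - pd i g x"
proof -
  assume a: "f differentiable at x" "g differentiable at x"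
  have "(\<lambda>y. - g y) differentiable at x" using a(2) by (simp add: differentiable_minus)
  then have "pd i (\<lambda>y. f y + - g y) x = pd i f x + pd i (\<lambda>y. - g y) x" using pd_add a by blast
  moreover have "pd i (\<lambda>y. - g y) x = - pd i g x" using pd_scale[OF a(2), of i "-1"] by simp
  ultimately show ?thesis by simp
qed

lemma pd_sum: "finite A \<Longrightarrow> (\<And>k. k \<in> A \<Longrightarrow> f k differentiable at x) \<Longrightarrow>
  pd i (\<lambda>y. \<Sum>k\<in>A. f k y) x = (\<Sum>k\<in>A. pd i (f k) x)"
proof (induction A rule: finite_induct)
  case empty then show ?case by (simp add: pd_const)
next
  case (insert a A)
  have d: "(\<lambda>y. \<Sum>k\<in>A. f k y) differentiable at x"
    using insert.prems by (intro differentiable_sum) (auto intro: insert.hyps)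
  have e: "(\<lambda>y. \<Sum>k\<in>insert a A. f k y) = (\<lambda>y. f a y + (\<Sum>k\<in>A. f k y))"
    using insert.hyps by (simp add: sum.insert)
  have "pd i (\<lambda>y. f a y + (\<Sum>k\<in>A. f k y)) x = pd i (f a) x + pd i (\<lambda>y. \<Sum>k\<in>A. f k y) x"
    using pd_add[OF _ d, of "f a" i] insert.prems by auto
  also have "\<dots> = pd i (f a) x + (\<Sum>k\<in>A. pd i (f k) x)"
    using insert.IH insert.prems by simp
  also have "\<dots> = (\<Sum>k\<in>insert a A. pd i (f k) x)"
    using insert.hyps by (rule sum.insert[symmetric])
  finally show ?case unfolding e .
qed

lemma Ck1_iff: "open S \<Longrightarrow> Ck_on 1 S f \<longleftrightarrow> (\<forall>x\<in>S. C1at f x)"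
proof -
  assume S: "open S"
  have "Ck_on 1 S f \<longleftrightarrow> (\<forall>x\<in>S. f differentiable at x) \<and> (\<forall>i. \<forall>x\<in>S. isCont (pd i f) x)"
    using S by (simp add: One_nat_def differentiable_on_eq_differentiable_at continuous_on_eq_continuous_at)
  also have "\<dots> \<longleftrightarrow> (\<forall>x\<in>S. C1at f x)"
    unfolding C1at_def using S by blast
  finally show ?thesis .
qed

lemma smooth_C1: "smooth f \<Longrightarrow> C1at f x"
  using Ck1_iff[of UNIV f] unfolding smooth_def by blast

lemma smooth_C1_pd: "smooth f \<Longrightarrow> C1at (pd j f) x"
proof -
  assume "smooth f"
  then have "Ck_on (Suc (Suc 0)) UNIV f" unfolding smooth_def by blast
  then have "Ck_on 1 UNIV (pd j f)" by (simp add: One_nat_def)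
  then show ?thesis using Ck1_iff[of UNIV] by blast
qed

lemma smooth_cont: "smooth f \<Longrightarrow> continuous_on UNIV f"
  unfolding smooth_def using Ck_on.simps(1) by blast



lemma contUNIV_C1: "(\<forall>x. C1at f x) \<Longrightarrow> continuous_on UNIV f"
  by (simp add: continuous_on_eq_continuous_at C1at_isCont)

lemma contUNIV_pd: "(\<forall>x. C1at f x) \<Longrightarrow> continuous_on UNIV (pd i f)"
  by (simp add: continuous_on_eq_continuous_at C1at_pd_isCont)

lemma line_deriv:
  fixes f :: "real^3 \<Rightarrow> real"
  assumes "f differentiable at (x + t *\<^sub>R e)"
  shows "((\<lambda>s. f (x + s *\<^sub>R e)) has_real_derivative frechet_derivative f (at (x + t *\<^sub>R e)) e) (at t)"
proof -
  let ?D = "frechet_derivative f (at (x + t *\<^sub>R e))"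
  have fd: "(f has_derivative ?D) (at (x + t *\<^sub>R e))" using assms frechet_derivative_works by blast
  have "((\<lambda>s. x + s *\<^sub>R e) has_derivative (\<lambda>s. s *\<^sub>R e)) (at t)"
    by (auto intro!: derivative_eq_intros)
  from has_derivative_compose[OF this fd]
  have "((\<lambda>s. f (x + s *\<^sub>R e)) has_derivative (\<lambda>s. ?D (s *\<^sub>R e))) (at t)" by (simp add: o_def)
  moreover have "(\<lambda>s. ?D (s *\<^sub>R e)) = (*) (?D e)"
  proof
    fix s show "?D (s *\<^sub>R e) = ?D e * s"
      using linear_cmul[OF has_derivative_linear[OF fd], of s e] by simp
  qed
  ultimately show ?thesis unfolding has_field_derivative_def by simp
qed

lemma integrable_bounded_support:
  fixes g :: "real^3 \<Rightarrow> real"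
  assumes "g \<in> borel_measurable lborel" "\<forall>x. \<bar>g x\<bar> \<le> M" "\<forall>x. x \<notin> cball 0 R \<longrightarrow> g x = 0"
  shows "integrable lborel g"
proof (rule Bochner_Integration.integrable_bound[of _ "\<lambda>x. M * indicator (cball 0 R) x"])
  show "integrable lborel (\<lambda>x. M * indicator (cball 0 R) x)"
    using emeasure_lborel_cball_finite by (intro integrable_mult_right integrable_real_indicator) auto
  show "g \<in> borel_measurable lborel" by fact
  have "norm (g x) \<le> norm (M * indicator (cball 0 R) x)" for x
  proof (cases "x \<in> cball 0 R")
    case True
    have "\<bar>g x\<bar> \<le> M" using assms(2) by blast
    then have "\<bar>g x\<bar> \<le> \<bar>M\<bar>" by linarith
    then show ?thesis using True by simp
  next
    case False then show ?thesis using assms(3) by simp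
  qed
  then show "AE x in lborel. norm (g x) \<le> norm (M * indicator (cball 0 R) x)" by simp
qed

lemma int_pd_zero:
  fixes f :: "real^3 \<Rightarrow> real"
  assumes C1: "\<forall>x. C1at f x" and R: "\<forall>x. R \<le> norm x \<longrightarrow> f x = 0"
  shows "integrable lborel (pd i f)" "(\<integral>x. pd i f x \<partial>lborel) = 0"
proof -
  define e :: "real^3" where "e = axis i 1"
  have ne: "norm e = 1" unfolding e_def by simp
  have contf: "continuous_on UNIV f" using contUNIV_C1[OF C1] .
  have contpd: "continuous_on UNIV (pd i f)" using contUNIV_pd[OF C1] .
  have pdz: "pd i f x = 0" if "R < norm x" for x
  proof -
    have "pd i f x = pd i (\<lambda>y. 0) x"
      by (rule pd_local[of "{y. R < norm y}"]) (use that R in \<open>auto intro: open_Collect_less continuous_intros\<close>)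
    then show ?thesis by (simp add: pd_const)
  qed
  have "bounded (pd i f ` cball 0 R)"
    by (rule compact_imp_bounded, rule compact_continuous_image)
      (use contpd continuous_on_subset in auto)
  then obtain M where M: "M > 0" "\<forall>y\<in>pd i f ` cball 0 R. norm y \<le> M"
    using bounded_pos by blast
  have Mb: "\<bar>pd i f x\<bar> \<le> M" for x
    using M pdz[of x] by (cases "norm x \<le> R") auto
  have fmeas: "f \<in> borel_measurable lborel" using borel_measurable_continuous_onI[OF contf] by simp
  have pdmeas: "pd i f \<in> borel_measurable lborel" using borel_measurable_continuous_onI[OF contpd] by simp
  have fint: "integrable lborel f"
  proof -
    have "integrable lborel (\<lambda>x. indicator (cball 0 R) x *\<^sub>R f x)"
      by (rule borel_integrable_compact) (use contf continuous_on_subset in auto)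
    moreover have "(\<lambda>x. indicator (cball 0 R) x *\<^sub>R f x) = f"
    proof
      fix x show "indicator (cball 0 R) x *\<^sub>R f x = f x"
        using R[rule_format, of x] by (cases "norm x \<le> R") (auto simp: indicator_def)
    qed
    ultimately show ?thesis by simp
  qed
  have shift: "integrable lborel (\<lambda>x. f (c + x)) \<and> (\<integral>x. f (c + x) \<partial>lborel) = (\<integral>x. f x \<partial>lborel)" for c :: "real^3"
  proof -
    have m: "(+) c \<in> measurable lborel borel" by simp
    have "integral\<^sup>L (distr lborel borel ((+) c)) f = (\<integral>x. f (c + x) \<partial>lborel)"
      using integral_distr[OF m, of f] fmeas by simp
    moreover have "integrable (distr lborel borel ((+) c)) f \<longleftrightarrow> integrable lborel (\<lambda>x. f (c + x))"
      using integrable_distr_eq[OF m, of f] fmeas by simp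
    ultimately show ?thesis using fint unfolding lborel_distr_plus by simp
  qed
  define h :: "nat \<Rightarrow> real" where "h n = inverse (real (Suc n))" for n
  have hpos: "0 < h n" "h n \<le> 1" for n unfolding h_def by (auto simp: field_simps)
  define s where "s n x = (f (x + h n *\<^sub>R e) - f x) / h n" for n x
  have sint: "(\<integral>x. s n x \<partial>lborel) = 0" for n
  proof -
    have "(\<integral>x. s n x \<partial>lborel) = (\<integral>x. f (h n *\<^sub>R e + x) - f x \<partial>lborel) / h n"
      unfolding s_def by (simp add: add.commute)
    also have "\<dots> = ((\<integral>x. f (h n *\<^sub>R e + x) \<partial>lborel) - (\<integral>x. f x \<partial>lborel)) / h n"
      using shift[of "h n *\<^sub>R e"] fint by (subst Bochner_Integration.integral_diff) auto
    also have "\<dots> = 0" using shift[of "h n *\<^sub>R e"] by simp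
    finally show ?thesis .
  qed
  have hlim: "filterlim h (at 0) sequentially"
    unfolding filterlim_at using hpos LIMSEQ_inverse_real_of_nat unfolding h_def
    by (auto intro!: always_eventually)
  have slim: "(\<lambda>n. s n x) \<longlonglongrightarrow> pd i f x" for x
  proof -
    have "f differentiable at (x + 0 *\<^sub>R e)" using C1 C1at_differentiable by simp
    from line_deriv[OF this]
    have "((\<lambda>t. f (x + t *\<^sub>R e)) has_real_derivative pd i f x) (at 0)"
      unfolding pd_def e_def by simp
    then have "((\<lambda>t. (f (x + t *\<^sub>R e) - f x) / t) \<longlongrightarrow> pd i f x) (at 0)"
      unfolding DERIV_def by simp
    from filterlim_compose[OF this hlim] show ?thesis unfolding s_def by simp
  qed
  have sbound: "norm (s n x) \<le> M * indicator (cball 0 (R + 1)) x" for n x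
  proof (cases "norm x \<le> R + 1")
    case False
    have "norm (x + h n *\<^sub>R e) \<ge> norm x - h n"
      using norm_triangle_ineq2[of x "- (h n *\<^sub>R e)"] ne hpos[of n] by simp
    then have "f (x + h n *\<^sub>R e) = 0" "f x = 0" using R False hpos[of n] by auto
    then show ?thesis unfolding s_def using M False by (simp add: indicator_def)
  next
    case True
    have "\<exists>z. 0 < z \<and> z < h n \<and> f (x + h n *\<^sub>R e) - f (x + 0 *\<^sub>R e) = (h n - 0) * pd i f (x + z *\<^sub>R e)"
    proof (rule MVT2[OF hpos(1)])
      fix t :: real
      have "f differentiable at (x + t *\<^sub>R e)" using C1 C1at_differentiable by simp
      from line_deriv[OF this] show "((\<lambda>t. f (x + t *\<^sub>R e)) has_real_derivative pd i f (x + t *\<^sub>R e)) (at t)"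
        unfolding pd_def e_def by simp
    qed
    then obtain z where "f (x + h n *\<^sub>R e) - f x = h n * pd i f (x + z *\<^sub>R e)" by auto
    then have "s n x = pd i f (x + z *\<^sub>R e)" unfolding s_def using hpos[of n] by simp
    then show ?thesis using Mb True by (simp add: indicator_def)
  qed
  have smeas: "s n \<in> borel_measurable lborel" for n
  proof -
    have "continuous_on UNIV (s n)" unfolding s_def using hpos[of n]
      by (intro continuous_intros continuous_on_compose2[OF contf]) auto
    then show ?thesis using borel_measurable_continuous_onI by simp
  qed
  have wint: "integrable lborel (\<lambda>x. M * indicator (cball 0 (R + 1)) x)"
    using emeasure_lborel_cball_finite by (intro integrable_mult_right integrable_real_indicator) auto
  show "integrable lborel (pd i f)"
    by (rule integrable_dominated_convergence[where s=s, OF pdmeas smeas wint]) (use slim sbound in auto)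
  have "(\<lambda>n. \<integral>x. s n x \<partial>lborel) \<longlonglongrightarrow> (\<integral>x. pd i f x \<partial>lborel)"
    by (rule integral_dominated_convergence[where s=s, OF pdmeas smeas wint]) (use slim sbound in auto)
  then have "(\<lambda>n. 0::real) \<longlonglongrightarrow> (\<integral>x. pd i f x \<partial>lborel)" by (simp only: sint)
  then show "(\<integral>x. pd i f x \<partial>lborel) = 0" using LIMSEQ_unique tendsto_const by metis
qed



definition P2 :: "real \<Rightarrow> real" where "P2 s = (max 0 s)^2"

lemma P2_deriv: "(P2 has_real_derivative 2 * max 0 s) (at s)"
proof -
  consider "s > 0" | "s < 0" | "s = 0" by linarith
  then show ?thesis
  proof cases
    case 1
    have "((\<lambda>t. t^2) has_real_derivative 2 * s) (at s)"
      by (auto intro!: derivative_eq_intros)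
    then have "(P2 has_real_derivative 2 * s) (at s)"
      by (rule has_field_derivative_transform_within_open[of _ _ _ "{0<..}"]) (use 1 in \<open>auto simp: P2_def\<close>)
    then show ?thesis using 1 by simp
  next
    case 2
    have "((\<lambda>t. 0) has_real_derivative 0) (at s)" by simp
    then have "(P2 has_real_derivative 0) (at s)"
      by (rule has_field_derivative_transform_within_open[of _ _ _ "{..<0}"]) (use 2 in \<open>auto simp: P2_def\<close>)
    then show ?thesis using 2 by simp
  next
    case 3
    have "((\<lambda>h. (P2 (0 + h) - P2 0) / h) \<longlongrightarrow> 0) (at 0)"
    proof (rule Lim_null_comparison[where g="\<lambda>h. \<bar>h\<bar>"])
      show "\<forall>\<^sub>F h in at 0. norm ((P2 (0 + h) - P2 0) / h) \<le> \<bar>h\<bar>"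
      proof (rule always_eventually, rule allI)
        fix h :: real
        show "norm ((P2 (0 + h) - P2 0) / h) \<le> \<bar>h\<bar>"
          by (cases "h > 0") (auto simp: P2_def power2_eq_square max_def)
      qed
      have "((\<lambda>h::real. \<bar>h\<bar>) \<longlongrightarrow> \<bar>0\<bar>) (at 0)" by (intro tendsto_intros)
      then show "((\<lambda>h::real. \<bar>h\<bar>) \<longlongrightarrow> 0) (at 0)" by simp
    qed
    then show ?thesis using 3 unfolding DERIV_def by simp
  qed
qed

definition hr :: "real \<Rightarrow> real" where
  "hr s = 2 * P2 s - 4 * P2 (s - 1/2) + 2 * P2 (s - 1)"

definition hr' :: "real \<Rightarrow> real" where
  "hr' s = 4 * max 0 s - 8 * max 0 (s - 1/2) + 4 * max 0 (s - 1)"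

lemma hr_deriv: "(hr has_real_derivative hr' s) (at s)"
proof -
  have a: "((\<lambda>t. P2 (t - c)) has_real_derivative 2 * max 0 (s - c)) (at s)" for c
  proof -
    have g: "((\<lambda>t. t - c) has_real_derivative 1) (at s)" by (auto intro!: derivative_eq_intros)
    have "((\<lambda>t. P2 ((\<lambda>t. t - c) t)) has_real_derivative 2 * max 0 (s - c) * 1) (at s)"
      by (rule DERIV_chain2[of P2 "2 * max 0 (s - c)" "\<lambda>t. t - c" s, OF _ g]) (simp add: P2_deriv)
    then show ?thesis by simp
  qed
  show ?thesis unfolding hr_def[abs_def] hr'_def
    using a[of 0] a[of "1/2"] a[of 1]
    by (auto intro!: derivative_eq_intros)
qed

lemma hr'_cont: "continuous_on UNIV hr'"
  unfolding hr'_def by (intro continuous_intros)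

lemma hr_0: "s \<le> 0 \<Longrightarrow> hr s = 0"
  unfolding hr_def P2_def by (simp add: max_def)

lemma hr_1: "1 \<le> s \<Longrightarrow> hr s = 1"
  unfolding hr_def P2_def by (simp add: max_def power2_eq_square algebra_simps)

lemma hr'_0: "s \<le> 0 \<or> 1 \<le> s \<Longrightarrow> hr' s = 0"
  unfolding hr'_def by (auto simp: max_def)

lemma hr'_bound: "0 \<le> hr' s \<and> hr' s \<le> 2"
  unfolding hr'_def by (auto simp: max_def)

lemma hr_bound: "0 \<le> hr s \<and> hr s \<le> 1"
proof -
  consider "s \<le> 0" | "0 \<le> s \<and> s \<le> 1/2" | "1/2 \<le> s \<and> s \<le> 1" | "1 \<le> s" by linarith
  then show ?thesis
  proof cases
    case 2
    then have "hr s = 2 * s^2" unfolding hr_def P2_def by (simp add: max_def)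
    moreover have "s^2 \<le> 1/4" using 2 power_mono[of s "1/2" 2] by (simp add: power2_eq_square)
    ultimately show ?thesis by simp
  next
    case 3
    then have "hr s = 2 * s^2 - 4 * (s - 1/2)^2" unfolding hr_def P2_def by (simp add: max_def)
    then have "hr s = 1 - 2 * (1 - s)^2" by (simp add: power2_eq_square algebra_simps)
    moreover have "(1-s)^2 \<le> 1/4" using 3 power_mono[of "1-s" "1/2" 2] by (simp add: power2_eq_square)
    ultimately show ?thesis by (simp add: power2_eq_square)
  qed (auto simp: hr_0 hr_1)
qed

lemma C1at_hr: "C1at f x \<Longrightarrow> C1at (\<lambda>y. hr (f y)) x"
  by (rule C1at_comp[OF _ hr_deriv hr'_cont])

lemma C1at_sq_dist: "C1at (\<lambda>y. (y - x0) \<bullet> (y - x0)) x"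
proof (rule C1at_deriv[of UNIV _ _ "\<lambda>y v. v \<bullet> (y - x0) + (y - x0) \<bullet> v"])
  show "((\<lambda>y. (y - x0) \<bullet> (y - x0)) has_derivative (\<lambda>v. v \<bullet> (y - x0) + (y - x0) \<bullet> v)) (at y)" for y
    by (auto intro!: derivative_eq_intros)
  show "isCont (\<lambda>y. axis i 1 \<bullet> (y - x0) + (y - x0) \<bullet> axis i 1) x" for i
    by (intro continuous_intros)
qed auto

definition bump :: "real^3 \<Rightarrow> real \<Rightarrow> real^3 \<Rightarrow> real" where
  "bump x0 r y = hr (inverse (3 * r^2) * (4 * r^2 - (y - x0) \<bullet> (y - x0)))"

lemma C1at_bump: "C1at (bump x0 r) x"
proof -
  have "C1at (\<lambda>y. inverse (3 * r^2) * (4 * r^2 - (y - x0) \<bullet> (y - x0))) x"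
    by (intro C1at_scale C1at_diff C1at_const C1at_sq_dist)
  then have "C1at (\<lambda>y. hr (inverse (3 * r^2) * (4 * r^2 - (y - x0) \<bullet> (y - x0)))) x"
    by (rule C1at_hr)
  then show ?thesis unfolding bump_def .
qed

lemma bump_1: "r > 0 \<Longrightarrow> dist y x0 \<le> r \<Longrightarrow> bump x0 r y = 1"
proof -
  assume r: "r > 0" "dist y x0 \<le> r"
  have "(y - x0) \<bullet> (y - x0) = (dist y x0)^2" by (simp add: dist_norm power2_norm_eq_inner)
  also have "\<dots> \<le> r^2" using r by (simp add: power_mono)
  finally have q: "(y - x0) \<bullet> (y - x0) \<le> r^2" .
  have pos: "0 < 3 * r^2" using r by simp
  have "1 = inverse (3 * r^2) * (3 * r^2)" using pos by simp
  also have "\<dots> \<le> inverse (3 * r^2) * (4 * r^2 - (y - x0) \<bullet> (y - x0))"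
    using q pos by (intro mult_left_mono) auto
  finally show ?thesis unfolding bump_def by (rule hr_1)
qed

lemma bump_0: "r > 0 \<Longrightarrow> 2 * r \<le> dist y x0 \<Longrightarrow> bump x0 r y = 0"
proof -
  assume r: "r > 0" "2 * r \<le> dist y x0"
  have "(y - x0) \<bullet> (y - x0) = (dist y x0)^2" by (simp add: dist_norm power2_norm_eq_inner)
  moreover have "(2 * r)^2 \<le> (dist y x0)^2" using r by (intro power_mono) auto
  ultimately have q: "4 * r^2 - (y - x0) \<bullet> (y - x0) \<le> 0" by (simp add: power_mult_distrib)
  have pos: "0 < 3 * r^2" using r by simp
  have "inverse (3 * r^2) * (4 * r^2 - (y - x0) \<bullet> (y - x0)) \<le> 0"
    using q pos by (intro mult_nonneg_nonpos) auto
  then show ?thesis unfolding bump_def by (rule hr_0)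
qed



definition adm :: "(real^3) set \<Rightarrow> (real^3 \<Rightarrow> real^3) \<Rightarrow> (real^3 \<Rightarrow> real^3) \<Rightarrow> bool" where
  "adm \<Omega> \<nu> G \<longleftrightarrow> continuous_on (closure \<Omega>) G \<and> (\<forall>j. \<forall>x\<in>\<Omega>. C1at (\<lambda>y. G y $ j) x) \<and>
     (\<exists>M. \<forall>x\<in>\<Omega>. \<bar>div3 G x\<bar> \<le> M) \<and> (\<forall>x\<in>frontier \<Omega>. \<nu> x \<bullet> G x = 0)"

definition Iint :: "(real^3) set \<Rightarrow> (real^3 \<Rightarrow> real^3) \<Rightarrow> real" where
  "Iint \<Omega> G = (\<integral>x. indicator \<Omega> x * div3 G x \<partial>lborel)"

lemma bounded_on_closure:
  fixes f :: "real^3 \<Rightarrow> 'b::real_normed_vector"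
  assumes "bounded \<Omega>" "continuous_on (closure \<Omega>) f"
  shows "\<exists>B>0. \<forall>x\<in>closure \<Omega>. norm (f x) \<le> B"
proof -
  have "compact (closure \<Omega>)" using assms(1) by (simp add: compact_closure)
  then have "bounded (f ` closure \<Omega>)" using compact_continuous_image assms(2) compact_imp_bounded by blast
  then show ?thesis unfolding bounded_pos by auto
qed

lemma zero_pd: "open U \<Longrightarrow> x \<in> U \<Longrightarrow> \<forall>z\<in>U. f z = 0 \<Longrightarrow> pd i f x = 0"
  using pd_local[of U x f "\<lambda>z. 0" i] pd_const by simp

lemma zero_C1at: "open U \<Longrightarrow> x \<in> U \<Longrightarrow> \<forall>z\<in>U. f z = 0 \<Longrightarrow> C1at f x"
  by (rule C1at_cong[OF _ C1at_const[of 0]]) (auto simp: eventually_nhds)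

lemma div3_mult:
  assumes "C1at \<theta> x" "\<forall>j. C1at (\<lambda>y. G y $ j) x"
  shows "div3 (\<lambda>y. \<theta> y *\<^sub>R G y) x = \<theta> x * div3 G x + (\<Sum>i\<in>UNIV. pd i \<theta> x * G x $ i)"
proof -
  have "div3 (\<lambda>y. \<theta> y *\<^sub>R G y) x = (\<Sum>i\<in>UNIV. pd i (\<lambda>y. \<theta> y * G y $ i) x)"
    unfolding div3_def by simp
  also have "\<dots> = (\<Sum>i\<in>UNIV. \<theta> x * pd i (\<lambda>y. G y $ i) x + pd i \<theta> x * G x $ i)"
    by (rule sum.cong[OF refl], rule pd_mult) (use assms C1at_differentiable in auto)
  also have "\<dots> = \<theta> x * div3 G x + (\<Sum>i\<in>UNIV. pd i \<theta> x * G x $ i)"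
    unfolding div3_def by (simp add: sum.distrib sum_distrib_left)
  finally show ?thesis .
qed

lemma div3_add:
  assumes "\<forall>j. C1at (\<lambda>y. G y $ j) x" "\<forall>j. C1at (\<lambda>y. K y $ j) x"
  shows "div3 (\<lambda>y. G y + K y) x = div3 G x + div3 K x"
proof -
  have "div3 (\<lambda>y. G y + K y) x = (\<Sum>i\<in>UNIV. pd i (\<lambda>y. G y $ i + K y $ i) x)"
    unfolding div3_def by simp
  also have "\<dots> = (\<Sum>i\<in>UNIV. pd i (\<lambda>y. G y $ i) x + pd i (\<lambda>y. K y $ i) x)"
    by (rule sum.cong[OF refl], rule pd_add) (use assms C1at_differentiable in auto)
  also have "\<dots> = div3 G x + div3 K x"
    unfolding div3_def by (simp add: sum.distrib)
  finally show ?thesis .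
qed

lemma adm_mult:
  assumes "bounded \<Omega>" "open \<Omega>" "\<forall>x. C1at \<theta> x" "adm \<Omega> \<nu> G"
  shows "adm \<Omega> \<nu> (\<lambda>y. \<theta> y *\<^sub>R G y)"
proof -
  have cG: "continuous_on (closure \<Omega>) G" and c1: "\<forall>j. \<forall>x\<in>\<Omega>. C1at (\<lambda>y. G y $ j) x"
    and bc: "\<forall>x\<in>frontier \<Omega>. \<nu> x \<bullet> G x = 0"
    using assms(4) unfolding adm_def by auto
  obtain M where M: "\<forall>x\<in>\<Omega>. \<bar>div3 G x\<bar> \<le> M" using assms(4) unfolding adm_def by auto
  have ct: "continuous_on (closure \<Omega>) \<theta>"
    using contUNIV_C1[OF assms(3)] continuous_on_subset by blast
  have cpt: "continuous_on (closure \<Omega>) (pd i \<theta>)" for i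
    using contUNIV_pd[OF assms(3)] continuous_on_subset by blast
  obtain BG where BG: "\<forall>x\<in>closure \<Omega>. norm (G x) \<le> BG" using bounded_on_closure[OF assms(1) cG] by auto
  obtain Bt where Bt: "\<forall>x\<in>closure \<Omega>. norm (\<theta> x) \<le> Bt" using bounded_on_closure[OF assms(1) ct] by auto
  have "\<exists>B. \<forall>x\<in>closure \<Omega>. norm (pd i \<theta> x) \<le> B" for i using bounded_on_closure[OF assms(1) cpt] by auto
  then obtain Bp where Bp: "\<forall>i. \<forall>x\<in>closure \<Omega>. norm (pd i \<theta> x) \<le> Bp i" by metis
  have "continuous_on (closure \<Omega>) (\<lambda>y. \<theta> y *\<^sub>R G y)" using ct cG by (intro continuous_intros)
  moreover have "\<forall>j. \<forall>x\<in>\<Omega>. C1at (\<lambda>y. (\<theta> y *\<^sub>R G y) $ j) x"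
    using c1 assms(3) by (auto intro: C1at_mult)
  moreover have "\<exists>M. \<forall>x\<in>\<Omega>. \<bar>div3 (\<lambda>y. \<theta> y *\<^sub>R G y) x\<bar> \<le> M"
  proof (intro exI ballI)
    fix x assume x: "x \<in> \<Omega>"
    then have xc: "x \<in> closure \<Omega>" using closure_subset by blast
    have "\<bar>div3 (\<lambda>y. \<theta> y *\<^sub>R G y) x\<bar> = \<bar>\<theta> x * div3 G x + (\<Sum>i\<in>UNIV. pd i \<theta> x * G x $ i)\<bar>"
      using div3_mult[of \<theta> x G] assms(3) c1 x by simp
    also have "\<dots> \<le> \<bar>\<theta> x\<bar> * \<bar>div3 G x\<bar> + (\<Sum>i\<in>UNIV. \<bar>pd i \<theta> x\<bar> * \<bar>G x $ i\<bar>)"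
      by (rule order_trans[OF abs_triangle_ineq]) (auto intro: order_trans[OF sum_abs] simp: abs_mult)
    also have "\<dots> \<le> Bt * M + (\<Sum>i\<in>UNIV. Bp i * BG)"
    proof -
      have t1: "\<bar>\<theta> x\<bar> \<le> Bt" using Bt xc by auto
      have t2: "\<bar>div3 G x\<bar> \<le> M" using M x by auto
      have t3: "0 \<le> Bt" using Bt xc by (meson norm_ge_zero order_trans)
      have "\<bar>\<theta> x\<bar> * \<bar>div3 G x\<bar> \<le> Bt * M" using t1 t2 t3 by (intro mult_mono) auto
      moreover have "\<bar>pd i \<theta> x\<bar> * \<bar>G x $ i\<bar> \<le> Bp i * BG" for i
      proof (rule mult_mono)
        show "\<bar>pd i \<theta> x\<bar> \<le> Bp i" using Bp xc by auto
        show "\<bar>G x $ i\<bar> \<le> BG" using BG xc component_le_norm_cart[of "G x" i] by (meson order_trans)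
        show "0 \<le> Bp i" using Bp xc by (meson norm_ge_zero order_trans)
      qed auto
      then have "(\<Sum>i\<in>UNIV. \<bar>pd i \<theta> x\<bar> * \<bar>G x $ i\<bar>) \<le> (\<Sum>i\<in>UNIV. Bp i * BG)"
        by (intro sum_mono) auto
      ultimately show ?thesis by linarith
    qed
    finally show "\<bar>div3 (\<lambda>y. \<theta> y *\<^sub>R G y) x\<bar> \<le> Bt * M + (\<Sum>i\<in>UNIV. Bp i * BG)" .
  qed
  moreover have "\<forall>x\<in>frontier \<Omega>. \<nu> x \<bullet> (\<theta> x *\<^sub>R G x) = 0" using bc by simp
  ultimately show ?thesis unfolding adm_def by blast
qed

lemma adm_integrable:
  assumes "open \<Omega>" "bounded \<Omega>" "adm \<Omega> \<nu> G"
  shows "integrable lborel (\<lambda>x. indicator \<Omega> x * div3 G x)"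
proof -
  have c1: "\<forall>j. \<forall>x\<in>\<Omega>. C1at (\<lambda>y. G y $ j) x" using assms(3) unfolding adm_def by auto
  obtain M where M: "\<forall>x\<in>\<Omega>. \<bar>div3 G x\<bar> \<le> M" using assms(3) unfolding adm_def by auto
  have "continuous_on \<Omega> (div3 G)"
    unfolding continuous_on_eq_continuous_at[OF assms(1)] div3_def
    using c1 C1at_pd_isCont by (auto intro!: continuous_intros)
  then have "(\<lambda>x. indicator \<Omega> x *\<^sub>R div3 G x) \<in> borel_measurable borel"
    using assms(1) by (intro borel_measurable_continuous_on_indicator) auto
  then have meas: "(\<lambda>x. indicator \<Omega> x * div3 G x) \<in> borel_measurable lborel" by simp
  obtain R where R: "\<Omega> \<subseteq> cball 0 R"
    using bounded_subset_ballD[OF assms(2), of 0] ball_subset_cball by blast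
  show ?thesis
  proof (rule integrable_bounded_support[OF meas, of "max M 0" R])
    show "\<forall>x. \<bar>indicator \<Omega> x * div3 G x\<bar> \<le> max M 0"
      using M by (auto simp: indicator_def)
    show "\<forall>x. x \<notin> cball 0 R \<longrightarrow> indicator \<Omega> x * div3 G x = 0"
      using R by (auto simp: indicator_def)
  qed
qed

lemma adm_zero_outside:
  assumes "open \<Omega>" "adm \<Omega> \<nu> G" "open U" "x \<in> U" "x \<in> \<Omega>" "\<forall>z\<in>U \<inter> \<Omega>. G z = 0"
  shows "div3 G x = 0"
  unfolding div3_def
  by (rule sum.neutral, rule ballI, rule zero_pd[of "U \<inter> \<Omega>"]) (use assms in auto)

lemma Iint_split:
  assumes "open \<Omega>" "bounded \<Omega>" "\<forall>x. C1at \<theta> x" "adm \<Omega> \<nu> G"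
  shows "Iint \<Omega> G = Iint \<Omega> (\<lambda>y. \<theta> y *\<^sub>R G y) + Iint \<Omega> (\<lambda>y. (1 - \<theta> y) *\<^sub>R G y)"
proof -
  have c1: "\<forall>j. \<forall>x\<in>\<Omega>. C1at (\<lambda>y. G y $ j) x" using assms(4) unfolding adm_def by auto
  have a1: "adm \<Omega> \<nu> (\<lambda>y. \<theta> y *\<^sub>R G y)" using adm_mult assms by blast
  have t2: "\<forall>x. C1at (\<lambda>y. 1 - \<theta> y) x" using assms(3) by (auto intro: C1at_diff C1at_const)
  have a2: "adm \<Omega> \<nu> (\<lambda>y. (1 - \<theta> y) *\<^sub>R G y)" using adm_mult[OF assms(2,1) t2 assms(4)] .
  have pt: "indicator \<Omega> x * div3 G x = indicator \<Omega> x * div3 (\<lambda>y. \<theta> y *\<^sub>R G y) x + indicator \<Omega> x * div3 (\<lambda>y. (1 - \<theta> y) *\<^sub>R G y) x" for x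
  proof (cases "x \<in> \<Omega>")
    case True
    have e: "G = (\<lambda>y. \<theta> y *\<^sub>R G y + (1 - \<theta> y) *\<^sub>R G y)" by (simp add: algebra_simps)
    have "div3 G x = div3 (\<lambda>y. \<theta> y *\<^sub>R G y + (1 - \<theta> y) *\<^sub>R G y) x" using e by metis
    also have "\<dots> = div3 (\<lambda>y. \<theta> y *\<^sub>R G y) x + div3 (\<lambda>y. (1 - \<theta> y) *\<^sub>R G y) x"
      by (rule div3_add) (use True c1 assms(3) t2 in \<open>auto intro: C1at_mult\<close>)
    finally show ?thesis by (simp add: algebra_simps)
  qed simp
  show ?thesis unfolding Iint_def pt
    by (rule Bochner_Integration.integral_add) (use adm_integrable a1 a2 assms in auto)
qed

lemma cover_induct:
  assumes "open \<Omega>" "bounded \<Omega>" "finite S" "\<forall>y\<in>S. rad y > 0"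
    and LOC: "\<forall>y\<in>S. \<forall>G. adm \<Omega> \<nu> G \<and> (\<forall>x\<in>closure \<Omega>. 2 * rad y \<le> dist x y \<longrightarrow> G x = 0) \<longrightarrow> Iint \<Omega> G = 0"
  shows "\<forall>G. adm \<Omega> \<nu> G \<and> (\<forall>x\<in>closure \<Omega>. G x \<noteq> 0 \<longrightarrow> (\<exists>y\<in>S. dist x y < rad y)) \<longrightarrow> Iint \<Omega> G = 0"
  using assms(3,4,5)
proof (induction S rule: finite_induct)
  case empty
  show ?case
  proof (intro allI impI)
    fix G assume G: "adm \<Omega> \<nu> G \<and> (\<forall>x\<in>closure \<Omega>. G x \<noteq> 0 \<longrightarrow> (\<exists>y\<in>{}. dist x y < rad y))"
    have "indicator \<Omega> x * div3 G x = 0" for x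
    proof (cases "x \<in> \<Omega>")
      case True
      have "div3 G x = 0"
        by (rule adm_zero_outside[of \<Omega> \<nu> G UNIV]) (use G True assms(1) closure_subset in auto)
      then show ?thesis by simp
    qed simp
    then have "(\<lambda>x. indicator \<Omega> x * div3 G x) = (\<lambda>x. 0)" by (intro ext)
    then show "Iint \<Omega> G = 0" unfolding Iint_def by simp
  qed
next
  case (insert y S)
  show ?case
  proof (intro allI impI)
    fix G assume G: "adm \<Omega> \<nu> G \<and> (\<forall>x\<in>closure \<Omega>. G x \<noteq> 0 \<longrightarrow> (\<exists>y'\<in>insert y S. dist x y' < rad y'))"
    define \<theta> where "\<theta> = bump y (rad y)"
    have ry: "rad y > 0" using insert by auto
    have th: "\<forall>x. C1at \<theta> x" unfolding \<theta>_def using C1at_bump by blast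
    have "Iint \<Omega> G = Iint \<Omega> (\<lambda>z. \<theta> z *\<^sub>R G z) + Iint \<Omega> (\<lambda>z. (1 - \<theta> z) *\<^sub>R G z)"
      using Iint_split[OF assms(1,2) th] G by blast
    moreover have "Iint \<Omega> (\<lambda>z. \<theta> z *\<^sub>R G z) = 0"
    proof -
      have "adm \<Omega> \<nu> (\<lambda>z. \<theta> z *\<^sub>R G z)" using adm_mult[OF assms(2,1) th] G by blast
      moreover have "\<forall>x\<in>closure \<Omega>. 2 * rad y \<le> dist x y \<longrightarrow> \<theta> x *\<^sub>R G x = 0"
        unfolding \<theta>_def using bump_0[OF ry] by simp
      ultimately show ?thesis using insert.prems(2) by blast
    qed
    moreover have "Iint \<Omega> (\<lambda>z. (1 - \<theta> z) *\<^sub>R G z) = 0"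
    proof -
      have t2: "\<forall>x. C1at (\<lambda>z. 1 - \<theta> z) x" using th by (auto intro: C1at_diff C1at_const)
      have "adm \<Omega> \<nu> (\<lambda>z. (1 - \<theta> z) *\<^sub>R G z)" using adm_mult[OF assms(2,1) t2] G by blast
      moreover have "\<forall>x\<in>closure \<Omega>. (1 - \<theta> x) *\<^sub>R G x \<noteq> 0 \<longrightarrow> (\<exists>y'\<in>S. dist x y' < rad y')"
      proof (intro ballI impI)
        fix x assume x: "x \<in> closure \<Omega>" "(1 - \<theta> x) *\<^sub>R G x \<noteq> 0"
        then have "G x \<noteq> 0" "\<theta> x \<noteq> 1" by auto
        then have "\<not> dist x y \<le> rad y" unfolding \<theta>_def using bump_1[OF ry] by auto
        moreover obtain y' where "y' \<in> insert y S" "dist x y' < rad y'" using G x \<open>G x \<noteq> 0\<close> by blast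
        ultimately show "\<exists>y'\<in>S. dist x y' < rad y'" by auto
      qed
      ultimately show ?thesis using insert.IH insert.prems by blast
    qed
    ultimately show "Iint \<Omega> G = 0" by simp
  qed
qed

lemma local_interior:
  assumes "open \<Omega>" "bounded \<Omega>" "r > 0" "cball y (3 * r) \<subseteq> \<Omega>" "adm \<Omega> \<nu> G"
    "\<forall>x\<in>closure \<Omega>. 2 * r \<le> dist x y \<longrightarrow> G x = 0"
  shows "Iint \<Omega> G = 0"
proof -
  have c1: "\<forall>j. \<forall>x\<in>\<Omega>. C1at (\<lambda>y. G y $ j) x" using assms(5) unfolding adm_def by auto
  define H where "H j x = (if x \<in> ball y (3 * r) then G x $ j else 0)" for j x
  define U where "U = {z. 2 * r < dist z y}"
  have oU: "open U" unfolding U_def by (intro open_Collect_less continuous_intros)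
  have HU: "\<forall>z\<in>U. H j z = 0" for j
  proof
    fix z assume z: "z \<in> U"
    show "H j z = 0"
    proof (cases "z \<in> ball y (3 * r)")
      case True
      then have "z \<in> \<Omega>" using assms(4) by auto
      then have "z \<in> closure \<Omega>" using closure_subset by blast
      then show ?thesis using assms(6) z True unfolding H_def U_def by auto
    qed (simp add: H_def)
  qed
  have HB: "\<forall>z\<in>ball y (3 * r). H j z = G z $ j" for j unfolding H_def by auto
  have C1H: "C1at (H j) x" for j x
  proof (cases "x \<in> ball y (3 * r)")
    case True
    have "x \<in> \<Omega>" using True assms(4) by auto
    then have "C1at (\<lambda>z. G z $ j) x" using c1 by blast
    then show ?thesis
      by (rule C1at_cong[rotated]) (use True HB in \<open>auto simp: eventually_nhds intro!: exI[of _ "ball y (3 * r)"]\<close>)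
  next
    case False
    then have "x \<in> U" unfolding U_def using assms(3) by (auto simp: dist_commute)
    then show ?thesis using zero_C1at[OF oU _ HU] by blast
  qed
  have Hsupp: "\<forall>x. norm y + 3 * r \<le> norm x \<longrightarrow> H j x = 0" for j
  proof (intro allI impI)
    fix x :: "real^3" assume "norm y + 3 * r \<le> norm x"
    then have "x \<notin> ball y (3 * r)" using norm_triangle_ineq2[of x y] norm_minus_commute[of x y] by (auto simp: dist_norm)
    then show "H j x = 0" unfolding H_def by auto
  qed
  have pt: "(\<Sum>j\<in>UNIV. pd j (H j) x) = indicator \<Omega> x * div3 G x" for x
  proof (cases "x \<in> ball y (3 * r)")
    case True
    then have "x \<in> \<Omega>" using assms(4) by auto
    moreover have "pd j (H j) x = pd j (\<lambda>z. G z $ j) x" for j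
      by (rule pd_local[of "ball y (3 * r)"]) (use True HB in auto)
    ultimately show ?thesis unfolding div3_def by simp
  next
    case False
    then have xU: "x \<in> U" unfolding U_def using assms(3) by (auto simp: dist_commute)
    have "pd j (H j) x = 0" for j using zero_pd[OF oU xU HU] .
    moreover have "indicator \<Omega> x * div3 G x = 0"
    proof (cases "x \<in> \<Omega>")
      case True
      have "div3 G x = 0"
      proof (rule adm_zero_outside[OF assms(1,5) oU xU True], rule ballI)
        fix z assume "z \<in> U \<inter> \<Omega>"
        then have "z \<in> closure \<Omega>" "2 * r \<le> dist z y" using closure_subset unfolding U_def by (auto simp: dist_commute)
        then show "G z = 0" using assms(6) by blast
      qed
      then show ?thesis by simp
    qed simp
    ultimately show ?thesis by simp
  qed
  have "Iint \<Omega> G = (\<integral>x. (\<Sum>j\<in>UNIV. pd j (H j) x) \<partial>lborel)" unfolding Iint_def pt ..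
  also have "\<dots> = (\<Sum>j\<in>UNIV. (\<integral>x. pd j (H j) x \<partial>lborel))"
    by (rule Bochner_Integration.integral_sum) (use int_pd_zero(1) C1H Hsupp in blast)
  also have "\<dots> = 0"
  proof (rule sum.neutral, rule ballI)
    fix j :: 3
    show "(\<integral>x. pd j (H j) x \<partial>lborel) = 0"
      by (rule int_pd_zero(2)[of "H j" "norm y + 3 * r"]) (use C1H Hsupp in auto)
  qed
  finally show ?thesis .
qed



lemma layer_measure:
  fixes \<phi> :: "real^3 \<Rightarrow> real" and e :: "real^3"
  assumes c: "c > 0" and \<delta>: "0 < \<delta>" "\<delta> \<le> c/2" and ne: "norm e = 1"
   and MONO: "\<forall>x\<in>ball x0 \<rho>. \<forall>t. x + t *\<^sub>R e \<in> ball x0 \<rho> \<longrightarrow> c * \<bar>t\<bar> \<le> \<bar>\<phi> (x + t *\<^sub>R e) - \<phi> x\<bar>"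
   and Lsub: "L \<subseteq> {x \<in> ball x0 \<rho>. -\<delta> < \<phi> x \<and> \<phi> x < 0}" and Lm: "L \<in> lmeasurable"
  shows "measure lebesgue L \<le> 2 * measure lebesgue (ball x0 (\<rho> + 1)) * \<delta> / c"
proof -
  define a where "a = \<delta> / c"
  have a: "0 < a" "a \<le> 1/2" using c \<delta> unfolding a_def by (auto simp: field_simps)
  define N where "N = nat \<lfloor>1 / a\<rfloor>"
  have N1: "real N \<ge> 1 / a - 1" unfolding N_def using a by linarith
  have N2: "real N * a \<le> 1"
  proof -
    have "\<lfloor>1/a\<rfloor> \<ge> 0" using a by simp
    then have "real N = real_of_int \<lfloor>1/a\<rfloor>" unfolding N_def by simp
    also have "\<dots> \<le> 1/a" by (rule of_int_floor_le)
    finally show ?thesis using a by (simp add: pos_le_divide_eq)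
  qed
  have Npos: "real N \<ge> 1 / (2 * a)"
  proof -
    have "1 / (2 * a) \<le> 1 / a - 1" using a by (simp add: field_simps)
    then show ?thesis using N1 by linarith
  qed
  define T where "T k = (+) ((real k * a) *\<^sub>R e) ` L" for k :: nat
  have Tm: "T k \<in> lmeasurable" for k unfolding T_def using measurable_translation[OF Lm] .
  have Tmeas: "measure lebesgue (T k) = measure lebesgue L" for k unfolding T_def by (rule measure_translation)
  have disj: "disjoint_family_on T {..<N}"
  proof (unfold disjoint_family_on_def, intro ballI impI)
    fix k l assume kl: "k \<in> {..<N}" "l \<in> {..<N}" "k \<noteq> l"
    show "T k \<inter> T l = {}"
    proof (rule ccontr)
      assume "T k \<inter> T l \<noteq> {}"
      then obtain x x' where x: "x \<in> L" "x' \<in> L" "(real k * a) *\<^sub>R e + x = (real l * a) *\<^sub>R e + x'"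
        unfolding T_def by auto
      define t where "t = (real k - real l) * a"
      have x'eq: "x' = x + t *\<^sub>R e" using x(3) unfolding t_def by (simp add: algebra_simps)
      have xb: "x \<in> ball x0 \<rho>" "x' \<in> ball x0 \<rho>" using x Lsub by auto
      have "c * \<bar>t\<bar> \<le> \<bar>\<phi> x' - \<phi> x\<bar>" using MONO xb x'eq by auto
      also have "\<dots> < \<delta>"
      proof -
        have "-\<delta> < \<phi> x" "\<phi> x < 0" "-\<delta> < \<phi> x'" "\<phi> x' < 0" using x(1,2) Lsub by auto
        then show ?thesis by linarith
      qed
      finally have "c * \<bar>t\<bar> < \<delta>" .
      then have "\<bar>t\<bar> < a" unfolding a_def using c by (simp add: field_simps)
      then have "\<bar>real k - real l\<bar> < 1" unfolding t_def using a by (simp add: abs_mult)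
      then show False using kl(3) by linarith
    qed
  qed
  have "measure lebesgue (\<Union>k\<in>{..<N}. T k) = (\<Sum>k\<in>{..<N}. measure lebesgue (T k))"
  proof (rule measure_finite_Union)
    show "T ` {..<N} \<subseteq> sets lebesgue"
    proof (rule image_subsetI)
      fix k show "T k \<in> sets lebesgue" using Tm[of k] by (rule fmeasurableD)
    qed
    show "emeasure lebesgue (T i) \<noteq> \<infinity>" for i using fmeasurableD2[OF Tm[of i]] by simp
  qed (use disj in auto)
  also have "\<dots> = real N * measure lebesgue L" using Tmeas by simp
  finally have U: "measure lebesgue (\<Union>k\<in>{..<N}. T k) = real N * measure lebesgue L" .
  have sub: "(\<Union>k\<in>{..<N}. T k) \<subseteq> ball x0 (\<rho> + 1)"
  proof
    fix z assume "z \<in> (\<Union>k\<in>{..<N}. T k)"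
    then obtain k x where kx: "k < N" "x \<in> L" "z = (real k * a) *\<^sub>R e + x" unfolding T_def by auto
    have "dist x x0 < \<rho>" using kx Lsub by (auto simp: dist_commute)
    moreover have "norm ((real k * a) *\<^sub>R e) \<le> 1"
    proof -
      have "real k * a \<le> real N * a" using kx a by (intro mult_right_mono) auto
      then have "real k * a \<le> 1" using N2 by linarith
      moreover have "0 \<le> real k * a" using a by simp
      ultimately show ?thesis using ne by simp
    qed
    moreover have "dist z x0 \<le> dist x x0 + norm ((real k * a) *\<^sub>R e)"
      unfolding kx(3) dist_norm by (metis add.commute add_diff_eq norm_triangle_ineq)
    ultimately show "z \<in> ball x0 (\<rho> + 1)" by (simp add: dist_commute)
  qed
  have "real N * measure lebesgue L \<le> measure lebesgue (ball x0 (\<rho> + 1))"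
    unfolding U[symmetric]
  proof (rule measure_mono_fmeasurable[OF sub])
    show "(\<Union>k\<in>{..<N}. T k) \<in> sets lebesgue"
      by (rule sets.finite_UN) (use Tm fmeasurableD in auto)
    show "ball x0 (\<rho> + 1) \<in> fmeasurable lebesgue" by simp
  qed
  moreover have mL: "measure lebesgue L \<ge> 0" by simp
  ultimately have "(1 / (2 * a)) * measure lebesgue L \<le> measure lebesgue (ball x0 (\<rho> + 1))"
    using Npos by (meson mult_right_mono order_trans)
  then show ?thesis unfolding a_def using c \<delta> by (simp add: field_simps)
qed

lemma small_near_zero:
  fixes g \<phi> :: "real^3 \<Rightarrow> real"
  assumes "compact K" "continuous_on K g" "continuous_on K \<phi>" "\<forall>x\<in>K. \<phi> x = 0 \<longrightarrow> g x = 0" "\<delta> > 0"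
  shows "\<exists>\<eta>>0. \<forall>x\<in>K. \<bar>\<phi> x\<bar> < \<eta> \<longrightarrow> \<bar>g x\<bar> < \<delta>"
proof -
  define D where "D = K \<inter> (\<lambda>x. \<bar>g x\<bar>) -` {\<delta>..}"
  have "closed D" unfolding D_def
    by (rule continuous_closed_preimage) (use assms compact_imp_closed in \<open>auto intro: continuous_intros\<close>)
  moreover have "bounded D" using compact_imp_bounded[OF assms(1)] unfolding D_def
    by (meson bounded_subset inf_le1)
  ultimately have cD: "compact D" using compact_eq_bounded_closed by blast
  show ?thesis
  proof (cases "D = {}")
    case True
    then show ?thesis unfolding D_def by (intro exI[of _ 1]) force
  next
    case False
    have "continuous_on D (\<lambda>x. \<bar>\<phi> x\<bar>)"
      using assms(3) unfolding D_def by (intro continuous_intros) (auto intro: continuous_on_subset)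
    then obtain xm where xm: "xm \<in> D" "\<forall>y\<in>D. \<bar>\<phi> xm\<bar> \<le> \<bar>\<phi> y\<bar>"
      using continuous_attains_inf[OF cD False] by blast
    have "\<phi> xm \<noteq> 0" using xm(1) assms(4,5) unfolding D_def by auto
    then have pos: "\<bar>\<phi> xm\<bar> > 0" by simp
    show ?thesis
    proof (intro exI[of _ "\<bar>\<phi> xm\<bar>"] conjI pos ballI impI)
      fix x assume x: "x \<in> K" "\<bar>\<phi> x\<bar> < \<bar>\<phi> xm\<bar>"
      show "\<bar>g x\<bar> < \<delta>"
      proof (rule ccontr)
        assume "\<not> \<bar>g x\<bar> < \<delta>"
        then have "x \<in> D" using x unfolding D_def by auto
        then show False using xm(2) x by force
      qed
    qed
  qed
qed



lemma pd_hr_affine: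
  assumes "f differentiable at x"
  shows "pd i (\<lambda>y. hr (a * f y + b)) x = hr' (a * f x + b) * (a * pd i f x)"
proof -
  have d: "(\<lambda>y. a * f y + b) differentiable at x" using assms by (intro derivative_intros) auto
  have d2: "(\<lambda>y. a * f y) differentiable at x" using assms by (intro derivative_intros) auto
  have "pd i (\<lambda>y. hr (a * f y + b)) x = hr' (a * f x + b) * pd i (\<lambda>y. a * f y + b) x"
    using pd_comp[OF d hr_deriv] by simp
  moreover have "pd i (\<lambda>y. a * f y + b) x = a * pd i f x"
    using pd_add[OF d2 differentiable_const, of i] pd_scale[OF assms, of i a] pd_const[of i b x] by simp
  ultimately show ?thesis by simp
qed

lemma C1at_hr_affine: "C1at f x \<Longrightarrow> C1at (\<lambda>y. hr (a * f y + b)) x"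
  by (intro C1at_hr C1at_add C1at_scale C1at_const)

lemma local_boundary:
  fixes \<phi> :: "real^3 \<Rightarrow> real" and e :: "real^3"
  assumes \<Omega>o: "open \<Omega>" and \<Omega>b: "bounded \<Omega>"
   and C1\<phi>: "\<forall>x\<in>ball x0 \<rho>. C1at \<phi> x"
   and gradnz: "\<forall>x\<in>ball x0 \<rho>. grad \<phi> x \<noteq> 0"
   and chart: "\<Omega> \<inter> ball x0 \<rho> = {x \<in> ball x0 \<rho>. \<phi> x < 0}"
   and normal: "\<forall>x\<in>frontier \<Omega> \<inter> ball x0 \<rho>. \<nu> x = grad \<phi> x /\<^sub>R norm (grad \<phi> x)"
   and c: "c > 0" and ne: "norm e = 1"
   and MONO: "\<forall>x\<in>ball x0 \<rho>. \<forall>t. x + t *\<^sub>R e \<in> ball x0 \<rho> \<longrightarrow> c * \<bar>t\<bar> \<le> \<bar>\<phi> (x + t *\<^sub>R e) - \<phi> x\<bar>"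
   and r: "r > 0" "3 * r < \<rho>"
   and Gadm: "adm \<Omega> \<nu> G" and Gz: "\<forall>x\<in>closure \<Omega>. 2 * r \<le> dist x x0 \<longrightarrow> G x = 0"
  shows "Iint \<Omega> G = 0"
proof -
  define B where "B = ball x0 \<rho>"
  have oB: "open B" unfolding B_def by simp
  have cB: "cball x0 (2*r) \<subseteq> B" "ball x0 (3*r) \<subseteq> B" "cball x0 (2*r) \<subseteq> ball x0 (3*r)"
    using r unfolding B_def by (auto simp: subset_eq)
  have cont\<phi>: "continuous_on B \<phi>" using C1\<phi> C1at_isCont unfolding B_def
    by (simp add: continuous_on_eq_continuous_at)
  have contpd: "continuous_on B (pd i \<phi>)" for i using C1\<phi> C1at_pd_isCont unfolding B_def
    by (simp add: continuous_on_eq_continuous_at)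
  have in\<Omega>: "x \<in> \<Omega>" if "x \<in> B" "\<phi> x < 0" for x using chart that unfolding B_def by blast
  have neg\<phi>: "\<phi> x < 0" if "x \<in> \<Omega>" "x \<in> B" for x using chart that unfolding B_def by blast
  have c1G: "\<forall>j. \<forall>x\<in>\<Omega>. C1at (\<lambda>y. G y $ j) x" and cG: "continuous_on (closure \<Omega>) G"
    and bc: "\<forall>x\<in>frontier \<Omega>. \<nu> x \<bullet> G x = 0"
    using Gadm unfolding adm_def by auto
  obtain M0 where M0: "\<forall>x\<in>\<Omega>. \<bar>div3 G x\<bar> \<le> M0" using Gadm unfolding adm_def by auto
  define M where "M = max M0 0"
  have M: "\<forall>x\<in>\<Omega>. \<bar>div3 G x\<bar> \<le> M" "M \<ge> 0" using M0 unfolding M_def by auto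
  define gg where "gg x = (\<Sum>i\<in>UNIV. pd i \<phi> x * G x $ i)" for x
  define K where "K = closure \<Omega> \<inter> cball x0 (2*r)"
  have cK: "compact K" unfolding K_def by (intro closed_Int_compact) auto
  have KB: "K \<subseteq> B" using cB unfolding K_def by auto
  have contgg: "continuous_on K gg"
  proof -
    have "continuous_on K (pd i \<phi>)" for i using contpd KB continuous_on_subset by blast
    moreover have "continuous_on K G" using cG continuous_on_subset unfolding K_def by blast
    ultimately show ?thesis unfolding gg_def by (intro continuous_intros) auto
  qed
  have cont\<phi>K: "continuous_on K \<phi>" using cont\<phi> KB continuous_on_subset by blast
  have zero: "\<forall>x\<in>K. \<phi> x = 0 \<longrightarrow> gg x = 0"
  proof (intro ballI impI)
    fix x assume x: "x \<in> K" "\<phi> x = 0"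
    have xB: "x \<in> B" using x KB by auto
    have "x \<notin> \<Omega>" using neg\<phi> xB x by force
    moreover have "x \<in> closure \<Omega>" using x unfolding K_def by auto
    ultimately have xf: "x \<in> frontier \<Omega>" unfolding frontier_def using interior_open[OF \<Omega>o] by auto
    have gn: "norm (grad \<phi> x) > 0" using gradnz xB unfolding B_def by auto
    have "\<nu> x = grad \<phi> x /\<^sub>R norm (grad \<phi> x)" using normal xf xB unfolding B_def by auto
    moreover have "\<nu> x \<bullet> G x = 0" using bc xf by blast
    ultimately have "(grad \<phi> x /\<^sub>R norm (grad \<phi> x)) \<bullet> G x = 0" by simp
    then have "inverse (norm (grad \<phi> x)) * (grad \<phi> x \<bullet> G x) = 0" by (simp only: inner_scaleR_left)
    then have "grad \<phi> x \<bullet> G x = 0" using gn by simp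
    moreover have "grad \<phi> x \<bullet> G x = gg x" unfolding gg_def grad_def inner_vec_def by simp
    ultimately show "gg x = 0" by simp
  qed
  define V where "V = measure lebesgue (ball x0 (\<rho> + 1)) + 1"
  have V: "V > 0" "measure lebesgue (ball x0 (\<rho> + 1)) \<le> V" unfolding V_def
    using measure_nonneg[of lebesgue "ball x0 (\<rho> + 1)"] by linarith+
  have main: "\<bar>Iint \<Omega> G\<bar> \<le> \<tau>" if \<tau>: "\<tau> > 0" for \<tau>
  proof -
    define \<delta> where "\<delta> = \<tau> * c / (16 * V)"
    have \<delta>: "\<delta> > 0" unfolding \<delta>_def using \<tau> c V by simp
    obtain \<eta> where \<eta>: "\<eta> > 0" "\<forall>x\<in>K. \<bar>\<phi> x\<bar> < \<eta> \<longrightarrow> \<bar>gg x\<bar> < \<delta>"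
      using small_near_zero[OF cK contgg cont\<phi>K zero \<delta>] by blast
    define \<epsilon> where "\<epsilon> = min (min (\<eta>/2) (c/4)) (\<tau> * c / (8 * V * (M + 1)))"
    have \<epsilon>: "\<epsilon> > 0" "\<epsilon> \<le> \<eta>/2" "\<epsilon> \<le> c/4" "\<epsilon> \<le> \<tau> * c / (8 * V * (M + 1))"
      unfolding \<epsilon>_def using \<eta> c \<tau> V M by auto
    define L where "L = {x \<in> B. -(2*\<epsilon>) < \<phi> x \<and> \<phi> x < 0}"
    have Lopen: "open L"
    proof -
      have "L = B \<inter> \<phi> -` {-(2*\<epsilon>)<..<0}" unfolding L_def by auto
      then show ?thesis using continuous_open_preimage[OF cont\<phi> oB, of "{-(2*\<epsilon>)<..<0}"] by simp
    qed
    have Lbd: "bounded L" unfolding L_def B_def by (rule bounded_subset[OF bounded_ball]) auto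
    have Llm: "L \<in> lmeasurable" using lmeasurable_open[OF Lbd Lopen] .
    have Lborel: "L \<in> sets lborel" using Lopen by simp
    have mL: "measure lborel L \<le> 4 * V * \<epsilon> / c"
    proof -
      have "measure lebesgue L \<le> 2 * measure lebesgue (ball x0 (\<rho> + 1)) * (2 * \<epsilon>) / c"
        by (rule layer_measure[OF c _ _ ne MONO _ Llm]) (use \<epsilon> in \<open>auto simp: L_def B_def\<close>)
      also have "\<dots> \<le> 2 * V * (2 * \<epsilon>) / c"
        using V \<epsilon> c by (intro divide_right_mono mult_right_mono) auto
      finally have "measure lebesgue L \<le> 4 * V * \<epsilon> / c" by simp
      moreover have "measure lebesgue L = measure lborel L" using Lborel by simp
      ultimately show ?thesis by simp
    qed
    define a where "a = -1/\<epsilon>"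
    define \<Psi> where "\<Psi> y = hr (a * \<phi> y + -1)" for y
    define O3 where "O3 = \<Omega> \<inter> ball x0 (3*r)"
    have oO3: "open O3" unfolding O3_def using \<Omega>o by auto
    define H where "H j y = (if y \<in> O3 then \<Psi> y * G y $ j else 0)" for j y
    define U1 where "U1 = - cball x0 (2*r)"
    have oU1: "open U1" unfolding U1_def by auto
    define U2 where "U2 = B \<inter> \<phi> -` {-\<epsilon><..}"
    have oU2: "open U2" unfolding U2_def using continuous_open_preimage[OF cont\<phi> oB] by simp
    have HU1: "\<forall>y\<in>U1. H j y = 0" for j
    proof
      fix y assume y: "y \<in> U1"
      show "H j y = 0"
      proof (cases "y \<in> O3")
        case True
        then have "y \<in> closure \<Omega>" unfolding O3_def using closure_subset by blast
        moreover have "2 * r \<le> dist y x0" using y unfolding U1_def by (auto simp: dist_commute)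
        ultimately show ?thesis using Gz True unfolding H_def by auto
      qed (simp add: H_def)
    qed
    have HU2: "\<forall>y\<in>U2. H j y = 0" for j
    proof
      fix y assume y: "y \<in> U2"
      have "a * \<phi> y + -1 \<le> 0"
      proof -
        have "-\<phi> y < \<epsilon>" using y unfolding U2_def by auto
        then have "(-\<phi> y) / \<epsilon> < 1" using \<epsilon>(1) by (simp only: divide_less_eq_1_pos)
        moreover have "a * \<phi> y = (-\<phi> y) / \<epsilon>" unfolding a_def by simp
        ultimately show ?thesis by simp
      qed
      then have "\<Psi> y = 0" unfolding \<Psi>_def by (rule hr_0)
      then show "H j y = 0" unfolding H_def by simp
    qed
    have C1\<Psi>: "C1at \<Psi> x" if "x \<in> B" for x
      unfolding \<Psi>_def[abs_def] by (rule C1at_hr_affine) (use C1\<phi> that in \<open>auto simp: B_def\<close>)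
    have C1H: "C1at (H j) x" for j x
    proof (cases "x \<in> O3")
      case True
      have "x \<in> B" "x \<in> \<Omega>" using True cB unfolding O3_def by auto
      then have "C1at (\<lambda>y. \<Psi> y * G y $ j) x" using C1\<Psi> c1G by (intro C1at_mult) auto
      then show ?thesis
        by (rule C1at_cong[rotated]) (use True oO3 in \<open>auto simp: eventually_nhds H_def intro!: exI[of _ O3]\<close>)
    next
      case False
      show ?thesis
      proof (cases "x \<in> U1")
        case True then show ?thesis using zero_C1at[OF oU1 _ HU1] by blast
      next
        case False2: False
        then have "x \<in> cball x0 (2*r)" unfolding U1_def by auto
        then have xB: "x \<in> B" and "x \<in> ball x0 (3*r)" using cB by auto
        then have "x \<notin> \<Omega>" using False unfolding O3_def by auto
        then have "\<phi> x \<ge> 0" using in\<Omega> xB by force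
        then have "x \<in> U2" unfolding U2_def using xB \<epsilon> by auto
        then show ?thesis using zero_C1at[OF oU2 _ HU2] by blast
      qed
    qed
    have Hsupp: "\<forall>x. norm x0 + 3 * r \<le> norm x \<longrightarrow> H j x = 0" for j
    proof (intro allI impI)
      fix x :: "real^3" assume "norm x0 + 3 * r \<le> norm x"
      then have "x \<notin> ball x0 (3 * r)" using norm_triangle_ineq2[of x x0] norm_minus_commute[of x x0] by (auto simp: dist_norm)
      then show "H j x = 0" unfolding H_def O3_def by auto
    qed
    have intpd: "integrable lborel (\<lambda>x. pd j (H j) x)" for j
      by (rule int_pd_zero(1)[of "H j" "norm x0 + 3 * r"]) (use C1H Hsupp in auto)
    have int0: "(\<integral>x. pd j (H j) x \<partial>lborel) = 0" for j
      by (rule int_pd_zero(2)[of "H j" "norm x0 + 3 * r"]) (use C1H Hsupp in auto)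
    define S where "S x = (\<Sum>j\<in>UNIV. pd j (H j) x)" for x
    have intS: "integrable lborel S" unfolding S_def using intpd by auto
    have S0: "(\<integral>x. S x \<partial>lborel) = 0" unfolding S_def
      by (subst Bochner_Integration.integral_sum) (use intpd int0 in auto)
    have Szero: "S x = 0" if "x \<in> U1 \<or> x \<in> U2" for x
      unfolding S_def using that zero_pd[OF oU1 _ HU1] zero_pd[OF oU2 _ HU2] by auto
    define Kc where "Kc = M + 2 * \<delta> / \<epsilon>"
    have Kc: "Kc \<ge> 0" unfolding Kc_def using M \<delta> \<epsilon> by auto
    have PB: "\<bar>indicator \<Omega> x * div3 G x - S x\<bar> \<le> Kc * indicator L x" for x
    proof (cases "x \<in> O3")
      case True
      have x\<Omega>: "x \<in> \<Omega>" and xB: "x \<in> B" using True cB unfolding O3_def by auto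
      have \<phi>neg: "\<phi> x < 0" using neg\<phi> x\<Omega> xB by blast
      define s where "s = a * \<phi> x + -1"
      have pdH: "pd j (H j) x = \<Psi> x * pd j (\<lambda>y. G y $ j) x + hr' s * (a * pd j \<phi> x) * G x $ j" for j
      proof -
        have "pd j (H j) x = pd j (\<lambda>y. \<Psi> y * G y $ j) x"
          by (rule pd_local[OF oO3 True]) (simp add: H_def)
        also have "\<dots> = \<Psi> x * pd j (\<lambda>y. G y $ j) x + pd j \<Psi> x * G x $ j"
          by (rule pd_mult) (use C1\<Psi>[OF xB] c1G x\<Omega> C1at_differentiable in auto)
        also have "pd j \<Psi> x = hr' s * (a * pd j \<phi> x)"
          unfolding \<Psi>_def[abs_def] s_def
          by (rule pd_hr_affine) (use C1\<phi> xB C1at_differentiable in \<open>auto simp: B_def\<close>)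
        finally show ?thesis .
      qed
      have Sx: "S x = \<Psi> x * div3 G x + hr' s * a * gg x"
        unfolding S_def pdH div3_def gg_def
        by (simp add: sum.distrib sum_distrib_left algebra_simps)
      have diff: "indicator \<Omega> x * div3 G x - S x = (1 - \<Psi> x) * div3 G x - hr' s * a * gg x"
        using x\<Omega> Sx by (simp add: algebra_simps)
      show ?thesis
      proof (cases "x \<in> L")
        case False
        then have "\<phi> x \<le> -(2*\<epsilon>)" using xB \<phi>neg unfolding L_def by auto
        then have "1 \<le> s"
        proof -
          assume h: "\<phi> x \<le> -(2*\<epsilon>)"
          have "a * \<phi> x = (-\<phi> x) / \<epsilon>" unfolding a_def by simp
          moreover have "2 \<le> (-\<phi> x) / \<epsilon>"
          proof -
            have "2 * \<epsilon> \<le> -\<phi> x" using h by linarith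
            moreover have "2 \<le> (-\<phi> x)/\<epsilon> \<longleftrightarrow> 2 * \<epsilon> \<le> -\<phi> x" by (rule pos_le_divide_eq[OF \<epsilon>(1)])
            ultimately show ?thesis by blast
          qed
          ultimately show ?thesis unfolding s_def by simp
        qed
        then have "\<Psi> x = 1" "hr' s = 0" unfolding \<Psi>_def s_def[symmetric] using hr_1 hr'_0 by auto
        then show ?thesis using diff Kc False by simp
      next
        case True
        have t1: "\<bar>(1 - \<Psi> x) * div3 G x\<bar> \<le> M"
        proof -
          have "\<bar>1 - \<Psi> x\<bar> \<le> 1" using hr_bound unfolding \<Psi>_def by (simp add: abs_le_iff)
          moreover have "\<bar>div3 G x\<bar> \<le> M" using M x\<Omega> by auto
          ultimately have "\<bar>1 - \<Psi> x\<bar> * \<bar>div3 G x\<bar> \<le> 1 * M" by (intro mult_mono) auto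
          then show ?thesis by (simp add: abs_mult)
        qed
        have ggb: "\<bar>gg x\<bar> \<le> \<delta>"
        proof (cases "dist x x0 \<le> 2 * r")
          case True
          then have "x \<in> K" unfolding K_def using x\<Omega> closure_subset by (auto simp: dist_commute)
          moreover have "\<bar>\<phi> x\<bar> < \<eta>" using \<open>x \<in> L\<close> \<epsilon> unfolding L_def by auto
          ultimately show ?thesis using \<eta> by fastforce
        next
          case False
          then have "G x = 0" using Gz x\<Omega> closure_subset by force
          then show ?thesis using \<delta> unfolding gg_def by simp
        qed
        have t2: "\<bar>hr' s * a * gg x\<bar> \<le> 2 * \<delta> / \<epsilon>"
        proof -
          have "\<bar>hr' s * a * gg x\<bar> = hr' s * \<bar>gg x\<bar> / \<epsilon>"
            using hr'_bound[of s] \<epsilon> unfolding a_def by (simp add: abs_mult)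
          also have "\<dots> \<le> 2 * \<delta> / \<epsilon>"
            using hr'_bound[of s] ggb \<epsilon> by (intro divide_right_mono mult_mono) auto
          finally show ?thesis .
        qed
        have "\<bar>indicator \<Omega> x * div3 G x - S x\<bar> \<le> M + 2 * \<delta> / \<epsilon>"
          unfolding diff using t1 t2 by linarith
        then show ?thesis using True unfolding Kc_def by simp
      qed
    next
      case False
      have lhs0: "indicator \<Omega> x * div3 G x - S x = 0"
      proof (cases "x \<in> U1")
        case True
        then have "S x = 0" using Szero by blast
        moreover have "indicator \<Omega> x * div3 G x = 0"
        proof (cases "x \<in> \<Omega>")
          case True2: True
          have "div3 G x = 0"
          proof (rule adm_zero_outside[OF \<Omega>o Gadm oU1 True True2], rule ballI)
            fix z assume "z \<in> U1 \<inter> \<Omega>"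
            then have "z \<in> closure \<Omega>" "2 * r \<le> dist z x0" using closure_subset unfolding U1_def
              by (auto simp: dist_commute)
            then show "G z = 0" using Gz by blast
          qed
          then show ?thesis by simp
        qed simp
        ultimately show ?thesis by simp
      next
        case False2: False
        then have "x \<in> cball x0 (2*r)" unfolding U1_def by auto
        then have xB: "x \<in> B" and "x \<in> ball x0 (3*r)" using cB by auto
        then have xn: "x \<notin> \<Omega>" using False unfolding O3_def by auto
        then have "\<phi> x \<ge> 0" using in\<Omega> xB by force
        then have "x \<in> U2" unfolding U2_def using xB \<epsilon> by auto
        then have "S x = 0" using Szero by blast
        then show ?thesis using xn by simp
      qed
      show ?thesis unfolding lhs0 using Kc by simp
    qed
    have intD: "integrable lborel (\<lambda>x. indicator \<Omega> x * div3 G x - S x)"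
      using adm_integrable[OF \<Omega>o \<Omega>b Gadm] intS by auto
    have intKL: "integrable lborel (\<lambda>x. Kc * indicator L x)"
      using Llm Lborel by (intro integrable_mult_right integrable_real_indicator) (auto simp: fmeasurable_def)
    have IG: "Iint \<Omega> G = (\<integral>x. indicator \<Omega> x * div3 G x - S x \<partial>lborel)"
      unfolding Iint_def
      by (subst Bochner_Integration.integral_diff) (use adm_integrable[OF \<Omega>o \<Omega>b Gadm] intS S0 in auto)
    have KL: "(\<integral>x. Kc * indicator L x \<partial>lborel) = Kc * measure lborel L" by simp
    have up: "Iint \<Omega> G \<le> Kc * measure lborel L"
      unfolding IG KL[symmetric]
      by (rule integral_mono[OF intD intKL]) (use PB in \<open>auto simp: abs_le_iff\<close>)
    have lo: "- (Kc * measure lborel L) \<le> Iint \<Omega> G"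
    proof -
      have "(\<integral>x. - (Kc * indicator L x) \<partial>lborel) \<le> (\<integral>x. indicator \<Omega> x * div3 G x - S x \<partial>lborel)"
      proof (rule integral_mono)
        show "integrable lborel (\<lambda>x. - (Kc * indicator L x))" using intKL by simp
        show "integrable lborel (\<lambda>x. indicator \<Omega> x * div3 G x - S x)" by (rule intD)
        fix x show "- (Kc * indicator L x) \<le> indicator \<Omega> x * div3 G x - S x"
          using PB[of x] unfolding abs_le_iff by linarith
      qed
      then show ?thesis unfolding IG using KL by simp
    qed
    have "\<bar>Iint \<Omega> G\<bar> \<le> Kc * measure lborel L" using up lo by linarith
    also have "\<dots> \<le> Kc * (4 * V * \<epsilon> / c)" using Kc mL by (intro mult_left_mono) auto
    also have "\<dots> = 4 * V * M * \<epsilon> / c + 8 * V * \<delta> / c"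
      unfolding Kc_def using \<epsilon> c by (simp add: field_simps)
    also have "\<dots> \<le> \<tau> / 2 + \<tau> / 2"
    proof (rule add_mono)
      have p8: "0 < 8 * V * (M + 1)" using V M by simp
      have e8: "\<epsilon> * (8 * V * (M + 1)) \<le> \<tau> * c" using \<epsilon>(4) pos_le_divide_eq[OF p8] by blast
      have "4 * V * M * \<epsilon> \<le> 4 * V * (M + 1) * \<epsilon>" using V \<epsilon> by (intro mult_right_mono mult_left_mono) auto
      also have "\<dots> = \<epsilon> * (8 * V * (M + 1)) / 2" by simp
      also have "\<dots> \<le> \<tau> * c / 2" using e8 by (intro divide_right_mono) auto
      finally have "4 * V * M * \<epsilon> \<le> \<tau> / 2 * c" by simp
      then show "4 * V * M * \<epsilon> / c \<le> \<tau> / 2" using c by (simp add: pos_divide_le_eq)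
      show "8 * V * \<delta> / c \<le> \<tau> / 2" unfolding \<delta>_def using V c by (simp add: field_simps)
    qed
    finally show ?thesis by simp
  qed
  show ?thesis
  proof (rule ccontr)
    assume "Iint \<Omega> G \<noteq> 0"
    then have "\<bar>Iint \<Omega> G\<bar> > 0" by simp
    from main[OF half_gt_zero[OF this]] this show False by simp
  qed
qed



lemma line_in_ball:
  fixes x e :: "real^3"
  assumes "x \<in> ball x0 \<rho>" "x + t *\<^sub>R e \<in> ball x0 \<rho>" "t \<noteq> 0" "0 \<le> s / t" "s / t \<le> 1"
  shows "x + s *\<^sub>R e \<in> ball x0 \<rho>"
proof -
  have "(1 - s/t) *\<^sub>R x + (s/t) *\<^sub>R (x + t *\<^sub>R e) \<in> ball x0 \<rho>"
    by (rule convexD[OF convex_ball assms(1,2)]) (use assms in auto)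
  moreover have "(1 - s/t) *\<^sub>R x + (s/t) *\<^sub>R (x + t *\<^sub>R e) = x + s *\<^sub>R e"
    using assms(3) by (simp add: algebra_simps)
  ultimately show ?thesis by simp
qed

lemma mono_from_pd:
  fixes \<phi> :: "real^3 \<Rightarrow> real"
  assumes C1: "\<forall>x\<in>ball x0 \<rho>. C1at \<phi> x" and lb: "\<forall>x\<in>ball x0 \<rho>. c \<le> \<bar>pd k \<phi> x\<bar>"
  shows "\<forall>x\<in>ball x0 \<rho>. \<forall>t. x + t *\<^sub>R axis k 1 \<in> ball x0 \<rho> \<longrightarrow> c * \<bar>t\<bar> \<le> \<bar>\<phi> (x + t *\<^sub>R axis k 1) - \<phi> x\<bar>"
proof (intro ballI allI impI)
  fix x t assume x: "x \<in> ball x0 \<rho>" and xt: "x + t *\<^sub>R axis k 1 \<in> ball x0 \<rho>"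
  define e :: "real^3" where "e = axis k 1"
  define g where "g s = \<phi> (x + s *\<^sub>R e)" for s
  have der: "(g has_real_derivative pd k \<phi> (x + s *\<^sub>R e)) (at s)" if "x + s *\<^sub>R e \<in> ball x0 \<rho>" for s
  proof -
    have "\<phi> differentiable at (x + s *\<^sub>R e)" using C1 that C1at_differentiable by blast
    from line_deriv[OF this] show ?thesis unfolding g_def pd_def e_def .
  qed
  have inb: "x + s *\<^sub>R e \<in> ball x0 \<rho>" if "t \<noteq> 0" "0 \<le> s / t" "s / t \<le> 1" for s
    using line_in_ball[OF x xt[folded e_def] that] .
  consider "t = 0" | "t > 0" | "t < 0" by linarith
  then show "c * \<bar>t\<bar> \<le> \<bar>\<phi> (x + t *\<^sub>R axis k 1) - \<phi> x\<bar>"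
  proof cases
    case 1 then show ?thesis by simp
  next
    case 2
    have "\<exists>z. 0 < z \<and> z < t \<and> g t - g 0 = (t - 0) * pd k \<phi> (x + z *\<^sub>R e)"
    proof (rule MVT2[OF 2])
      fix s :: real assume s: "0 \<le> s" "s \<le> t"
      then have "x + s *\<^sub>R e \<in> ball x0 \<rho>" using inb[of s] 2 by (auto simp: divide_le_eq_1)
      then show "(g has_real_derivative pd k \<phi> (x + s *\<^sub>R e)) (at s)" by (rule der)
    qed
    then obtain z where z: "0 < z" "z < t" "g t - g 0 = t * pd k \<phi> (x + z *\<^sub>R e)" by auto
    have "x + z *\<^sub>R e \<in> ball x0 \<rho>" using inb[of z] z 2 by (auto simp: divide_le_eq_1)
    then have "c \<le> \<bar>pd k \<phi> (x + z *\<^sub>R e)\<bar>" using lb by blast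
    then have "c * \<bar>t\<bar> \<le> \<bar>pd k \<phi> (x + z *\<^sub>R e)\<bar> * \<bar>t\<bar>" by (intro mult_right_mono) auto
    also have "\<dots> = \<bar>g t - g 0\<bar>" using z(3) by (simp add: abs_mult)
    finally show ?thesis unfolding g_def e_def by simp
  next
    case 3
    have "\<exists>z. t < z \<and> z < 0 \<and> g 0 - g t = (0 - t) * pd k \<phi> (x + z *\<^sub>R e)"
    proof (rule MVT2[OF 3])
      fix s :: real assume s: "t \<le> s" "s \<le> 0"
      then have "x + s *\<^sub>R e \<in> ball x0 \<rho>" using inb[of s] 3
        by (auto simp: zero_le_divide_iff divide_le_eq_1)
      then show "(g has_real_derivative pd k \<phi> (x + s *\<^sub>R e)) (at s)" by (rule der)
    qed
    then obtain z where z: "t < z" "z < 0" "g 0 - g t = (- t) * pd k \<phi> (x + z *\<^sub>R e)" by auto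
    have "x + z *\<^sub>R e \<in> ball x0 \<rho>" using inb[of z] z 3 by (auto simp: zero_le_divide_iff divide_le_eq_1)
    then have "c \<le> \<bar>pd k \<phi> (x + z *\<^sub>R e)\<bar>" using lb by blast
    then have "c * \<bar>t\<bar> \<le> \<bar>pd k \<phi> (x + z *\<^sub>R e)\<bar> * \<bar>t\<bar>" by (intro mult_right_mono) auto
    also have "\<dots> = \<bar>g 0 - g t\<bar>" using z(3) by (simp add: abs_mult)
    also have "\<dots> = \<bar>g t - g 0\<bar>" by (simp add: abs_minus_commute)
    finally show ?thesis unfolding g_def e_def by simp
  qed
qed

lemma boundary_good:
  assumes \<Omega>o: "open \<Omega>" and \<Omega>b: "bounded \<Omega>" and bdry: "C2_boundary_normal \<Omega> \<nu>" and x0: "x0 \<in> frontier \<Omega>"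
  shows "\<exists>\<rho>>0. \<forall>G. adm \<Omega> \<nu> G \<and> (\<forall>x\<in>closure \<Omega>. 2 * \<rho> \<le> dist x x0 \<longrightarrow> G x = 0) \<longrightarrow> Iint \<Omega> G = 0"
proof -
  obtain r0 \<phi> where r0: "r0 > 0" and Ck2: "Ck_on 2 (ball x0 r0) \<phi>"
    and gradnz: "\<forall>x\<in>ball x0 r0. grad \<phi> x \<noteq> 0"
    and chart: "\<Omega> \<inter> ball x0 r0 = {x \<in> ball x0 r0. \<phi> x < 0}"
    and normal: "\<forall>x \<in> frontier \<Omega> \<inter> ball x0 r0. \<nu> x = grad \<phi> x /\<^sub>R norm (grad \<phi> x)"
    using bdry x0 unfolding C2_boundary_normal_def by blast
  have C1\<phi>: "\<forall>x\<in>ball x0 r0. C1at \<phi> x"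
  proof -
    have "Ck_on (Suc (Suc 0)) (ball x0 r0) \<phi>" using Ck2 by (simp add: numeral_2_eq_2)
    then have "\<phi> differentiable_on ball x0 r0" "\<forall>i. pd i \<phi> differentiable_on ball x0 r0" by auto
    then have "Ck_on 1 (ball x0 r0) \<phi>" by (simp add: One_nat_def differentiable_imp_continuous_on)
    then show ?thesis using Ck1_iff[of "ball x0 r0" \<phi>] by simp
  qed
  have "grad \<phi> x0 \<noteq> 0" using gradnz r0 by simp
  then obtain k where k: "pd k \<phi> x0 \<noteq> 0" unfolding grad_def by (auto simp: vec_eq_iff)
  define d where "d = \<bar>pd k \<phi> x0\<bar>"
  have d: "d > 0" using k unfolding d_def by simp
  have "isCont (pd k \<phi>) x0" using C1\<phi> r0 C1at_pd_isCont by simp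
  then obtain \<rho>1 where \<rho>1: "\<rho>1 > 0" "\<forall>y. dist y x0 < \<rho>1 \<longrightarrow> dist (pd k \<phi> y) (pd k \<phi> x0) < d/2"
    unfolding continuous_at_eps_delta using d by (meson half_gt_zero)
  define \<rho> where "\<rho> = min r0 \<rho>1"
  have \<rho>: "\<rho> > 0" "ball x0 \<rho> \<subseteq> ball x0 r0" unfolding \<rho>_def using r0 \<rho>1 by auto
  have lb: "\<forall>x\<in>ball x0 \<rho>. d/2 \<le> \<bar>pd k \<phi> x\<bar>"
  proof
    fix x assume "x \<in> ball x0 \<rho>"
    then have "dist x x0 < \<rho>1" unfolding \<rho>_def by (auto simp: dist_commute)
    then have "\<bar>pd k \<phi> x - pd k \<phi> x0\<bar> < d/2" using \<rho>1 by (auto simp: dist_real_def)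
    then show "d/2 \<le> \<bar>pd k \<phi> x\<bar>" unfolding d_def by linarith
  qed
  have C1\<rho>: "\<forall>x\<in>ball x0 \<rho>. C1at \<phi> x" using C1\<phi> \<rho> by blast
  have MONO: "\<forall>x\<in>ball x0 \<rho>. \<forall>t. x + t *\<^sub>R axis k 1 \<in> ball x0 \<rho> \<longrightarrow> d/2 * \<bar>t\<bar> \<le> \<bar>\<phi> (x + t *\<^sub>R axis k 1) - \<phi> x\<bar>"
    by (rule mono_from_pd[OF C1\<rho> lb])
  have chart\<rho>: "\<Omega> \<inter> ball x0 \<rho> = {x \<in> ball x0 \<rho>. \<phi> x < 0}"
    using chart \<rho>(2) by blast
  have normal\<rho>: "\<forall>x\<in>frontier \<Omega> \<inter> ball x0 \<rho>. \<nu> x = grad \<phi> x /\<^sub>R norm (grad \<phi> x)"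
    using normal \<rho>(2) by blast
  have gradnz\<rho>: "\<forall>x\<in>ball x0 \<rho>. grad \<phi> x \<noteq> 0" using gradnz \<rho>(2) by blast
  show ?thesis
  proof (intro exI[of _ "\<rho>/4"] conjI allI impI)
    show "\<rho>/4 > 0" using \<rho> by simp
    fix G assume G: "adm \<Omega> \<nu> G \<and> (\<forall>x\<in>closure \<Omega>. 2 * (\<rho>/4) \<le> dist x x0 \<longrightarrow> G x = 0)"
    show "Iint \<Omega> G = 0"
      by (rule local_boundary[OF \<Omega>o \<Omega>b C1\<rho> gradnz\<rho> chart\<rho> normal\<rho> _ _ MONO, of "\<rho>/4"])
         (use d \<rho> G in auto)
  qed
qed

lemma interior_good:
  assumes \<Omega>o: "open \<Omega>" and \<Omega>b: "bounded \<Omega>" and x0: "x0 \<in> \<Omega>"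
  shows "\<exists>\<rho>>0. \<forall>G. adm \<Omega> \<nu> G \<and> (\<forall>x\<in>closure \<Omega>. 2 * \<rho> \<le> dist x x0 \<longrightarrow> G x = 0) \<longrightarrow> Iint \<Omega> G = 0"
proof -
  obtain \<epsilon> where \<epsilon>: "\<epsilon> > 0" "cball x0 \<epsilon> \<subseteq> \<Omega>" using \<Omega>o x0 open_contains_cball by blast
  show ?thesis
  proof (intro exI[of _ "\<epsilon>/3"] conjI allI impI)
    show "\<epsilon>/3 > 0" using \<epsilon> by simp
    fix G assume G: "adm \<Omega> \<nu> G \<and> (\<forall>x\<in>closure \<Omega>. 2 * (\<epsilon>/3) \<le> dist x x0 \<longrightarrow> G x = 0)"
    show "Iint \<Omega> G = 0"
      by (rule local_interior[OF \<Omega>o \<Omega>b, of "\<epsilon>/3" x0]) (use \<epsilon> G in auto)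
  qed
qed

theorem div_zero:
  assumes \<Omega>o: "open \<Omega>" and \<Omega>b: "bounded \<Omega>" and bdry: "C2_boundary_normal \<Omega> \<nu>" and G: "adm \<Omega> \<nu> G"
  shows "Iint \<Omega> G = 0"
proof -
  have "\<forall>y\<in>closure \<Omega>. \<exists>\<rho>>0. \<forall>G. adm \<Omega> \<nu> G \<and> (\<forall>x\<in>closure \<Omega>. 2 * \<rho> \<le> dist x y \<longrightarrow> G x = 0) \<longrightarrow> Iint \<Omega> G = 0"
  proof
    fix y assume y: "y \<in> closure \<Omega>"
    show "\<exists>\<rho>>0. \<forall>G. adm \<Omega> \<nu> G \<and> (\<forall>x\<in>closure \<Omega>. 2 * \<rho> \<le> dist x y \<longrightarrow> G x = 0) \<longrightarrow> Iint \<Omega> G = 0"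
    proof (cases "y \<in> \<Omega>")
      case True then show ?thesis using interior_good[OF \<Omega>o \<Omega>b] by blast
    next
      case False
      then have "y \<in> frontier \<Omega>" using y interior_open[OF \<Omega>o] unfolding frontier_def by auto
      then show ?thesis using boundary_good[OF \<Omega>o \<Omega>b bdry] by blast
    qed
  qed
  then obtain rad where rad: "\<forall>y\<in>closure \<Omega>. rad y > 0 \<and> (\<forall>G. adm \<Omega> \<nu> G \<and> (\<forall>x\<in>closure \<Omega>. 2 * rad y \<le> dist x y \<longrightarrow> G x = 0) \<longrightarrow> Iint \<Omega> G = 0)"
    by metis
  have cc: "compact (closure \<Omega>)" using \<Omega>b by (simp add: compact_closure)
  have cov: "closure \<Omega> \<subseteq> (\<Union>y\<in>closure \<Omega>. ball y (rad y))" using rad by force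
  obtain S where S: "S \<subseteq> closure \<Omega>" "finite S" "closure \<Omega> \<subseteq> (\<Union>y\<in>S. ball y (rad y))"
    using compactE_image[OF cc _ cov] by blast
  have "\<forall>G. adm \<Omega> \<nu> G \<and> (\<forall>x\<in>closure \<Omega>. G x \<noteq> 0 \<longrightarrow> (\<exists>y\<in>S. dist x y < rad y)) \<longrightarrow> Iint \<Omega> G = 0"
    by (rule cover_induct[OF \<Omega>o \<Omega>b S(2)]) (use rad S(1) in blast)+
  moreover have "\<forall>x\<in>closure \<Omega>. G x \<noteq> 0 \<longrightarrow> (\<exists>y\<in>S. dist x y < rad y)"
    using S(3) by (force simp: dist_commute)
  ultimately show ?thesis using G by blast
qed



lemma alg_identity:
  fixes a b P :: "3 \<Rightarrow> real" and D W :: "3 \<Rightarrow> 3 \<Rightarrow> real" and q :: real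
  assumes h1: "(\<Sum>j\<in>UNIV. D j j) = 0" and h2: "\<forall>k. (\<Sum>j\<in>UNIV. a j * D j k) + P k = 0"
  shows "(\<Sum>j\<in>UNIV. (\<Sum>k\<in>UNIV. a k * b k) * D j j + (\<Sum>k\<in>UNIV. a k * W j k + D j k * b k) * a j + (q * W j j + P j * b j))
         = (\<Sum>i\<in>UNIV. \<Sum>j\<in>UNIV. a i * a j * W j i) + q * (\<Sum>j\<in>UNIV. W j j)"
proof -
  have s1: "(\<Sum>j\<in>UNIV. (\<Sum>k\<in>UNIV. a k * b k) * D j j) = 0"
    using h1 by (simp add: sum_distrib_left[symmetric])
  have s2: "(\<Sum>j\<in>UNIV. (\<Sum>k\<in>UNIV. a k * W j k + D j k * b k) * a j)
      = (\<Sum>j\<in>UNIV. \<Sum>k\<in>UNIV. a k * W j k * a j) + (\<Sum>j\<in>UNIV. \<Sum>k\<in>UNIV. D j k * b k * a j)"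
    by (simp add: sum_distrib_right sum.distrib distrib_right)
  have s3: "(\<Sum>j\<in>UNIV. \<Sum>k\<in>UNIV. a k * W j k * a j) = (\<Sum>i\<in>UNIV. \<Sum>j\<in>UNIV. a i * a j * W j i)"
    by (subst sum.swap) (simp add: mult_ac)
  have s4: "(\<Sum>j\<in>UNIV. \<Sum>k\<in>UNIV. D j k * b k * a j) = (\<Sum>k\<in>UNIV. b k * (\<Sum>j\<in>UNIV. a j * D j k))"
    by (subst sum.swap) (simp add: sum_distrib_left mult_ac)
  have e: "(\<Sum>j\<in>UNIV. a j * D j k) = - P k" for k using h2[rule_format, of k] by linarith
  have s5: "(\<Sum>k\<in>UNIV. b k * (\<Sum>j\<in>UNIV. a j * D j k)) = - (\<Sum>k\<in>UNIV. P k * b k)"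
    unfolding e by (simp add: sum_negf[symmetric] mult_ac)
  have s6: "(\<Sum>j\<in>UNIV. q * W j j + P j * b j) = q * (\<Sum>j\<in>UNIV. W j j) + (\<Sum>j\<in>UNIV. P j * b j)"
    by (simp add: sum.distrib sum_distrib_left)
  have "(\<Sum>j\<in>UNIV. (\<Sum>k\<in>UNIV. a k * b k) * D j j + (\<Sum>k\<in>UNIV. a k * W j k + D j k * b k) * a j + (q * W j j + P j * b j))
     = (\<Sum>j\<in>UNIV. (\<Sum>k\<in>UNIV. a k * b k) * D j j) + (\<Sum>j\<in>UNIV. (\<Sum>k\<in>UNIV. a k * W j k + D j k * b k) * a j)
       + (\<Sum>j\<in>UNIV. q * W j j + P j * b j)"
    by (simp only: sum.distrib)
  also have "\<dots> = (\<Sum>i\<in>UNIV. \<Sum>j\<in>UNIV. a i * a j * W j i) + q * (\<Sum>j\<in>UNIV. W j j)"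
    unfolding s1 s2 s3 s4 s5 s6 by simp
  finally show ?thesis .
qed

theorem lemma2p1:
  fixes \<Omega> :: "(real^3) set" and \<nu> v :: "real^3 \<Rightarrow> real^3" and pt :: "real^3 \<Rightarrow> real" and c :: real
  assumes dom: "open \<Omega>" "connected \<Omega>" "bounded \<Omega>" "\<Omega> \<noteq> {}"
    and bdry: "C2_boundary_normal \<Omega> \<nu>"
    and v_C1: "\<forall>i. Ck_on 1 \<Omega> (\<lambda>x. v x $ i)"
    and v_L2: "set_borel_measurable lborel \<Omega> v" "set_integrable lborel \<Omega> (\<lambda>x. (norm (v x))\<^sup>2)"
    and p_C1: "Ck_on 1 \<Omega> pt"
    and p_L1: "set_integrable lborel \<Omega> pt"
    and v_cont: "continuous_on (closure \<Omega>) v"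
    and p_cont: "continuous_on (closure \<Omega>) pt"
    and euler: "\<forall>x\<in>\<Omega>. \<forall>i. (\<Sum>j\<in>UNIV. v x $ j * pd j (\<lambda>y. v y $ i) x) + pd i pt x = 0"
    and divfree: "\<forall>x\<in>\<Omega>. div3 v x = 0"
    and bc_v: "\<forall>x\<in>frontier \<Omega>. \<nu> x \<bullet> v x = 0"
    and bc_p: "\<forall>x\<in>frontier \<Omega>. pt x = c"
  shows "weak_euler (\<lambda>x. if x \<in> \<Omega> then v x else 0) (\<lambda>x. if x \<in> \<Omega> then pt x else c)"
proof -
  define u where "u x = (if x \<in> \<Omega> then v x else 0)" for x
  define p where "p x = (if x \<in> \<Omega> then pt x else c)" for x
  have \<Omega>o: "open \<Omega>" and \<Omega>b: "bounded \<Omega>" using dom by auto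
  have vC1: "\<forall>i. \<forall>x\<in>\<Omega>. C1at (\<lambda>x. v x $ i) x" using v_C1 Ck1_iff[OF \<Omega>o] by blast
  have pC1: "\<forall>x\<in>\<Omega>. C1at pt x" using p_C1 Ck1_iff[OF \<Omega>o] by blast
  obtain Bv where Bv: "Bv > 0" "\<forall>x\<in>closure \<Omega>. norm (v x) \<le> Bv" using bounded_on_closure[OF \<Omega>b v_cont] by auto
  obtain Bp where Bp: "Bp > 0" "\<forall>x\<in>closure \<Omega>. norm (pt x) \<le> Bp" using bounded_on_closure[OF \<Omega>b p_cont] by auto
  have vadm: "adm \<Omega> \<nu> v"
    unfolding adm_def using v_cont vC1 divfree bc_v by (auto intro!: exI[of _ 0])
  have umeas: "u \<in> borel_measurable lborel"
  proof -
    have "(\<lambda>x. indicator \<Omega> x *\<^sub>R v x) \<in> borel_measurable lborel" using v_L2(1) unfolding set_borel_measurable_def .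
    moreover have "(\<lambda>x. indicator \<Omega> x *\<^sub>R v x) = u" unfolding u_def by (auto simp: indicator_def)
    ultimately show ?thesis by simp
  qed
  have ubound: "norm (u x) \<le> Bv" for x
  proof (cases "x \<in> \<Omega>")
    case True
    then have "x \<in> closure \<Omega>" using closure_subset by blast
    then show ?thesis using True Bv(2) unfolding u_def by simp
  next
    case False then show ?thesis using Bv(1) unfolding u_def by simp
  qed
  have pmeas: "p \<in> borel_measurable lborel"
  proof -
    have m1: "(\<lambda>x. indicator \<Omega> x *\<^sub>R pt x) \<in> borel_measurable lborel"
      using p_L1 unfolding set_integrable_def by (rule borel_measurable_integrable)
    have "- \<Omega> \<in> sets borel" using \<Omega>o by (simp add: borel_closed closed_Compl)
    then have m2: "(\<lambda>x. c * indicator (- \<Omega>) x) \<in> borel_measurable lborel" by simp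
    have "p = (\<lambda>x. indicator \<Omega> x *\<^sub>R pt x + c * indicator (- \<Omega>) x)" unfolding p_def by (auto simp: indicator_def)
    then show ?thesis using m1 m2 by simp
  qed
  have pbound: "\<bar>p x\<bar> \<le> Bp + \<bar>c\<bar>" for x
  proof (cases "x \<in> \<Omega>")
    case True
    then have "x \<in> closure \<Omega>" using closure_subset by blast
    then have "\<bar>pt x\<bar> \<le> Bp" using Bp(2) by (simp add: real_norm_def)
    then show ?thesis using True unfolding p_def by simp
  next
    case False then show ?thesis using Bp(1) unfolding p_def by simp
  qed
  have L2gen: "set_integrable lborel K (\<lambda>x. (norm (f x))\<^sup>2)"
    if K: "compact K" and fm: "f \<in> borel_measurable lborel" and fb: "\<forall>x. norm (f x) \<le> B"
    for K and f :: "real^3 \<Rightarrow> 'b::euclidean_space" and B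
  proof -
    obtain RK where RK: "K \<subseteq> cball 0 RK"
      using bounded_subset_ballD[OF compact_imp_bounded[OF K], of 0] ball_subset_cball by blast
    have Ks: "K \<in> sets lborel" using K by (simp add: borel_compact)
    have "(\<lambda>x. indicator K x *\<^sub>R (norm (f x))\<^sup>2) \<in> borel_measurable lborel"
      using fm Ks by measurable
    then show ?thesis unfolding set_integrable_def
    proof (rule integrable_bounded_support[of _ "B^2" RK])
      show "\<forall>x. \<bar>indicator K x *\<^sub>R (norm (f x))\<^sup>2\<bar> \<le> B^2"
      proof
        fix x
        have "(norm (f x))^2 \<le> B^2" using fb norm_ge_zero by (intro power_mono) auto
        then show "\<bar>indicator K x *\<^sub>R (norm (f x))\<^sup>2\<bar> \<le> B^2" by (auto simp: indicator_def)
      qed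
      show "\<forall>x. x \<notin> cball 0 RK \<longrightarrow> indicator K x *\<^sub>R (norm (f x))\<^sup>2 = 0"
      proof (intro allI impI)
        fix x :: "real^3" assume "x \<notin> cball 0 RK"
        then have "x \<notin> K" using RK by blast
        then show "indicator K x *\<^sub>R (norm (f x))\<^sup>2 = 0" by simp
      qed
    qed
  qed
  have ub: "\<forall>x. norm (u x) \<le> Bv" using ubound by blast
  have L2u: "L2_loc u" unfolding L2_loc_def using umeas L2gen[OF _ umeas ub] by blast
  have pb: "\<forall>x. norm (p x) \<le> Bp + \<bar>c\<bar>" using pbound by (simp add: real_norm_def)
  have L2p: "L2_loc p" unfolding L2_loc_def using pmeas L2gen[OF _ pmeas pb] by blast
  have mom: "(\<integral>x. tensor_grad (u x) w x + p x * div3 w x \<partial>lborel) = 0" if tw: "test_field w" for w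
  proof -
    have wsm: "smooth (\<lambda>x. w x $ i)" for i using tw unfolding test_field_def by blast
    have wC1: "C1at (\<lambda>x. w x $ i) x" for i x using smooth_C1[OF wsm] .
    have wC1pd: "C1at (pd j (\<lambda>x. w x $ i)) x" for i j x using smooth_C1_pd[OF wsm] .
    have wcont: "continuous_on UNIV w"
    proof -
      have "continuous_on UNIV (\<lambda>x. \<chi> i. w x $ i)" by (rule continuous_on_vec_lambda) (rule smooth_cont[OF wsm])
      then show ?thesis by simp
    qed
    have wpdcont: "continuous_on UNIV (pd j (\<lambda>x. w x $ i))" for i j
      using contUNIV_C1[of "pd j (\<lambda>x. w x $ i)"] wC1pd by blast
    obtain Rw where Rw: "\<forall>x. Rw \<le> norm x \<longrightarrow> w x = 0"
    proof -
      have "compact (closure {x. w x \<noteq> 0})" using tw[unfolded test_field_def] by (rule conjunct2)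
      then have "bounded (closure {x. w x \<noteq> 0})" by (rule compact_imp_bounded)
      then have "\<exists>r. 0 < r \<and> closure {x. w x \<noteq> 0} \<subseteq> ball 0 r" by (rule bounded_subset_ballD)
      then obtain Rw where Rw0: "closure {x. w x \<noteq> 0} \<subseteq> ball 0 Rw"
        by (elim exE conjE)
      have "w x = 0" if "Rw \<le> norm x" for x
      proof (rule ccontr)
        assume "w x \<noteq> 0"
        then have "x \<in> {x. w x \<noteq> 0}" by simp
        then have "x \<in> closure {x. w x \<noteq> 0}" by (rule subsetD[OF closure_subset])
        then have "x \<in> ball 0 Rw" by (rule subsetD[OF Rw0])
        then have "norm x < Rw" by simp
        then show False using that by simp
      qed
      then have "\<forall>x. Rw \<le> norm x \<longrightarrow> w x = 0" by blast
      then show ?thesis by (rule that)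
    qed
    have wsupp: "\<forall>x. Rw \<le> norm x \<longrightarrow> w x $ i = 0" for i using Rw by simp
    have intpdw: "integrable lborel (pd i (\<lambda>x. w x $ i))" for i
      using int_pd_zero(1)[of "\<lambda>x. w x $ i" Rw i] wC1 wsupp by blast
    have int0w: "(\<integral>x. pd i (\<lambda>x. w x $ i) x \<partial>lborel) = 0" for i
      using int_pd_zero(2)[of "\<lambda>x. w x $ i" Rw i] wC1 wsupp by blast
    have divw_int: "integrable lborel (div3 w)" unfolding div3_def[abs_def] using intpdw by auto
    have divw0: "(\<integral>x. div3 w x \<partial>lborel) = 0" unfolding div3_def
      by (subst Bochner_Integration.integral_sum) (use intpdw int0w in auto)
    define E where "E x = tensor_grad (v x) w x + (pt x - c) * div3 w x" for x
    define F where "F x = (v x \<bullet> w x) *\<^sub>R v x + (pt x - c) *\<^sub>R w x" for x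
    have Fcomp_fun: "(\<lambda>y. F y $ j) = (\<lambda>y. (\<Sum>k\<in>UNIV. v y $ k * w y $ k) * v y $ j + (pt y - c) * w y $ j)" for j
      unfolding F_def by (simp add: inner_vec_def)
    have FC1: "\<forall>j. \<forall>x\<in>\<Omega>. C1at (\<lambda>y. F y $ j) x"
      unfolding Fcomp_fun using vC1 pC1 wC1
      by (auto intro!: C1at_add C1at_mult C1at_sum C1at_diff C1at_const)
    have divF: "div3 F x = E x" if x: "x \<in> \<Omega>" for x
    proof -
      have dv: "(\<lambda>y. v y $ k) differentiable at x" for k using vC1 x C1at_differentiable by blast
      have dw: "(\<lambda>y. w y $ k) differentiable at x" for k using wC1 C1at_differentiable by blast
      have dp: "pt differentiable at x" using pC1 x C1at_differentiable by blast
      have dA: "(\<lambda>y. \<Sum>k\<in>UNIV. v y $ k * w y $ k) differentiable at x"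
        using dv dw by (intro derivative_intros) auto
      have dpc: "(\<lambda>y. pt y - c) differentiable at x" using dp by (intro derivative_intros) auto
      have pdA: "pd j (\<lambda>y. \<Sum>k\<in>UNIV. v y $ k * w y $ k) x
           = (\<Sum>k\<in>UNIV. v x $ k * pd j (\<lambda>y. w y $ k) x + pd j (\<lambda>y. v y $ k) x * w x $ k)" for j
      proof -
        have "pd j (\<lambda>y. \<Sum>k\<in>UNIV. v y $ k * w y $ k) x = (\<Sum>k\<in>UNIV. pd j (\<lambda>y. v y $ k * w y $ k) x)"
          by (rule pd_sum) (use dv dw in \<open>auto intro: derivative_intros\<close>)
        also have "\<dots> = (\<Sum>k\<in>UNIV. v x $ k * pd j (\<lambda>y. w y $ k) x + pd j (\<lambda>y. v y $ k) x * w x $ k)"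
          by (rule sum.cong[OF refl], rule pd_mult) (use dv dw in auto)
        finally show ?thesis .
      qed
      have pdpc: "pd j (\<lambda>y. pt y - c) x = pd j pt x" for j
        using pd_diff[OF dp differentiable_const, of j] pd_const by simp
      have pdF: "pd j (\<lambda>y. F y $ j) x =
          (\<Sum>k\<in>UNIV. v x $ k * w x $ k) * pd j (\<lambda>y. v y $ j) x
          + (\<Sum>k\<in>UNIV. v x $ k * pd j (\<lambda>y. w y $ k) x + pd j (\<lambda>y. v y $ k) x * w x $ k) * v x $ j
          + ((pt x - c) * pd j (\<lambda>y. w y $ j) x + pd j pt x * w x $ j)" for j
      proof -
        have "pd j (\<lambda>y. F y $ j) x = pd j (\<lambda>y. (\<Sum>k\<in>UNIV. v y $ k * w y $ k) * v y $ j + (pt y - c) * w y $ j) x"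
          unfolding Fcomp_fun ..
        also have "\<dots> = pd j (\<lambda>y. (\<Sum>k\<in>UNIV. v y $ k * w y $ k) * v y $ j) x + pd j (\<lambda>y. (pt y - c) * w y $ j) x"
          by (rule pd_add) (use dA dv dpc dw in \<open>auto intro: derivative_intros\<close>)
        also have "pd j (\<lambda>y. (\<Sum>k\<in>UNIV. v y $ k * w y $ k) * v y $ j) x =
            (\<Sum>k\<in>UNIV. v x $ k * w x $ k) * pd j (\<lambda>y. v y $ j) x + pd j (\<lambda>y. \<Sum>k\<in>UNIV. v y $ k * w y $ k) x * v x $ j"
          by (rule pd_mult[OF dA dv])
        also have "pd j (\<lambda>y. (pt y - c) * w y $ j) x = (pt x - c) * pd j (\<lambda>y. w y $ j) x + pd j (\<lambda>y. pt y - c) x * w x $ j"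
          by (rule pd_mult[OF dpc dw])
        finally show ?thesis unfolding pdA pdpc by simp
      qed
      have "div3 F x = (\<Sum>j\<in>UNIV. (\<Sum>k\<in>UNIV. v x $ k * w x $ k) * pd j (\<lambda>y. v y $ j) x
          + (\<Sum>k\<in>UNIV. v x $ k * pd j (\<lambda>y. w y $ k) x + pd j (\<lambda>y. v y $ k) x * w x $ k) * v x $ j
          + ((pt x - c) * pd j (\<lambda>y. w y $ j) x + pd j pt x * w x $ j))"
        unfolding div3_def pdF ..
      also have "\<dots> = (\<Sum>i\<in>UNIV. \<Sum>j\<in>UNIV. v x $ i * v x $ j * pd j (\<lambda>y. w y $ i) x) + (pt x - c) * (\<Sum>j\<in>UNIV. pd j (\<lambda>y. w y $ j) x)"
      proof (rule alg_identity)
        show "(\<Sum>j\<in>UNIV. pd j (\<lambda>y. v y $ j) x) = 0" using divfree x unfolding div3_def by blast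
        show "\<forall>k. (\<Sum>j\<in>UNIV. v x $ j * pd j (\<lambda>y. v y $ k) x) + pd k pt x = 0" using euler x by blast
      qed
      also have "\<dots> = E x" unfolding E_def tensor_grad_def div3_def ..
      finally show ?thesis .
    qed
    have Econt: "continuous_on (closure \<Omega>) E"
    proof -
      have "continuous_on (closure \<Omega>) (pd j (\<lambda>x. w x $ i))" for i j
        using wpdcont continuous_on_subset by blast
      then show ?thesis unfolding E_def tensor_grad_def div3_def
        using v_cont p_cont by (intro continuous_intros) auto
    qed
    obtain BE where BE: "\<forall>x\<in>closure \<Omega>. norm (E x) \<le> BE" using bounded_on_closure[OF \<Omega>b Econt] by auto
    have Fadm: "adm \<Omega> \<nu> F"
      unfolding adm_def
    proof (intro conjI)
      show "continuous_on (closure \<Omega>) F" unfolding F_def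
        using v_cont p_cont continuous_on_subset[OF wcont] by (intro continuous_intros) auto
      show "\<forall>j. \<forall>x\<in>\<Omega>. C1at (\<lambda>y. F y $ j) x" by (rule FC1)
      show "\<exists>M. \<forall>x\<in>\<Omega>. \<bar>div3 F x\<bar> \<le> M"
        using BE divF closure_subset by (intro exI[of _ BE]) force
      show "\<forall>x\<in>frontier \<Omega>. \<nu> x \<bullet> F x = 0"
        using bc_v bc_p unfolding F_def by (simp add: inner_add_right)
    qed
    have IF: "Iint \<Omega> F = 0" by (rule div_zero[OF \<Omega>o \<Omega>b bdry Fadm])
    have eqE: "(\<lambda>x. indicator \<Omega> x * div3 F x) = (\<lambda>x. indicator \<Omega> x * E x)"
      using divF by (auto simp: indicator_def fun_eq_iff)
    have intE: "integrable lborel (\<lambda>x. indicator \<Omega> x * E x)"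
      using adm_integrable[OF \<Omega>o \<Omega>b Fadm] unfolding eqE .
    have IE: "(\<integral>x. indicator \<Omega> x * E x \<partial>lborel) = 0" using IF unfolding Iint_def eqE .
    have pt_eq: "tensor_grad (u x) w x + p x * div3 w x = indicator \<Omega> x * E x + c * div3 w x" for x
      unfolding u_def p_def E_def by (cases "x \<in> \<Omega>") (auto simp: tensor_grad_def algebra_simps)
    have "(\<integral>x. tensor_grad (u x) w x + p x * div3 w x \<partial>lborel)
        = (\<integral>x. indicator \<Omega> x * E x + c * div3 w x \<partial>lborel)" unfolding pt_eq ..
    also have "\<dots> = (\<integral>x. indicator \<Omega> x * E x \<partial>lborel) + (\<integral>x. c * div3 w x \<partial>lborel)"
      by (rule Bochner_Integration.integral_add) (use intE divw_int in auto)
    also have "\<dots> = 0" using IE divw0 by simp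
    finally show ?thesis .
  qed
  have dvz: "(\<integral>x. u x \<bullet> grad \<phi> x \<partial>lborel) = 0" if tf: "test_fun \<phi>" for \<phi>
  proof -
    have sm: "smooth \<phi>" using tf unfolding test_fun_def by blast
    have \<phi>C1: "\<forall>x. C1at \<phi> x" using smooth_C1[OF sm] by blast
    have adm2: "adm \<Omega> \<nu> (\<lambda>y. \<phi> y *\<^sub>R v y)" using adm_mult[OF \<Omega>b \<Omega>o \<phi>C1 vadm] .
    have I2: "Iint \<Omega> (\<lambda>y. \<phi> y *\<^sub>R v y) = 0" by (rule div_zero[OF \<Omega>o \<Omega>b bdry adm2])
    have "indicator \<Omega> x * div3 (\<lambda>y. \<phi> y *\<^sub>R v y) x = u x \<bullet> grad \<phi> x" for x
    proof (cases "x \<in> \<Omega>")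
      case True
      have "div3 (\<lambda>y. \<phi> y *\<^sub>R v y) x = \<phi> x * div3 v x + (\<Sum>i\<in>UNIV. pd i \<phi> x * v x $ i)"
        using div3_mult[of \<phi> x v] \<phi>C1 vC1 True by blast
      then show ?thesis using True divfree unfolding u_def grad_def inner_vec_def by (simp add: mult.commute)
    qed (simp add: u_def)
    then show ?thesis using I2 unfolding Iint_def by simp
  qed
  have ueq: "(\<lambda>x. if x \<in> \<Omega> then v x else 0) = u" unfolding u_def ..
  have peq: "(\<lambda>x. if x \<in> \<Omega> then pt x else c) = p" unfolding p_def ..
  show ?thesis unfolding weak_euler_def ueq peq using L2u L2p mom dvz by blast
qed


end
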